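(* Fix a real number $\beta>-1$. Let $s\in\mathbb{C}$ with $0<|s|<1$ be such that $\psi_s(z)=\dfrac{sz}{1-(1-s)z}$ maps $\mathbb{D}$ into $\mathbb{D}$. Then the composition operator $C_{\psi_s}f=f\circ\psi_s$ is not cyclic on $A^2_\beta$.
   Context: $\mathbb{D}$ is the open unit disc. For $\beta>-1$, $A^2_\beta$ is the Hilbert space of analytic functions $f(z)=\sum_{n\ge0}\widehat f(n)z^n$ on $\mathbb{D}$ with inner product $\langle f,g\rangle=\sum_{n\ge0}\frac{n!\,\Gamma(2+\beta)}{\Gamma(n+2+\beta)}\widehat f(n)\overline{\widehat g(n)}$ (equivalently the $L^2$ inner product with respect to $(\beta+1)(1-|z|^2)^\beta dA(z)$). An operator $T$ on $\mathcal H$ is cyclic if there is $f\in\mathcal H$ such that the linear span of $\{T^nf:n\ge0\}$ is dense in $\mathcal H$. *)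

theory Defs
  imports "HOL-Complex_Analysis.Complex_Analysis"
begin

definition taylor_coeff :: "(complex \<Rightarrow> complex) \<Rightarrow> nat \<Rightarrow> complex" where
  "taylor_coeff f n = (deriv ^^ n) f 0 / of_nat (fact n)"

definition bergman_weight :: "real \<Rightarrow> nat \<Rightarrow> real" where
  "bergman_weight \<beta> n = fact n * Gamma (2 + \<beta>) / Gamma (real n + 2 + \<beta>)"

text \<open>The weighted Bergman space A^2_beta as a set of functions (values off the disc irrelevant).\<close>
definition A2 :: "real \<Rightarrow> (complex \<Rightarrow> complex) set" where
  "A2 \<beta> = {f. f holomorphic_on ball 0 1 \<and>
              summable (\<lambda>n. bergman_weight \<beta> n * (cmod (taylor_coeff f n))\<^sup>2)}"

definition A2_norm :: "real \<Rightarrow> (complex \<Rightarrow> complex) \<Rightarrow> real" where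
  "A2_norm \<beta> f = sqrt (\<Sum>n. bergman_weight \<beta> n * (cmod (taylor_coeff f n))\<^sup>2)"

definition cyclic_on_A2 :: "real \<Rightarrow> ((complex \<Rightarrow> complex) \<Rightarrow> (complex \<Rightarrow> complex)) \<Rightarrow> bool" where
  "cyclic_on_A2 \<beta> T \<longleftrightarrow>
     (\<exists>f\<in>A2 \<beta>. \<forall>g\<in>A2 \<beta>. \<forall>\<epsilon>>0. \<exists>N::nat. \<exists>c::nat \<Rightarrow> complex.
        A2_norm \<beta> (\<lambda>z. g z - (\<Sum>k<N. c k * (T ^^ k) f z)) < \<epsilon>)"

definition comp_op :: "(complex \<Rightarrow> complex) \<Rightarrow> (complex \<Rightarrow> complex) \<Rightarrow> (complex \<Rightarrow> complex)" where
  "comp_op \<psi> f = f \<circ> \<psi>"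

definition psi :: "complex \<Rightarrow> complex \<Rightarrow> complex" where
  "psi s z = s * z / (1 - (1 - s) * z)"

end

theory Submission
  imports Defs
begin


lemma weight_pos: assumes "\<beta> > -1" shows "bergman_weight \<beta> n > 0"
proof -
  have "Gamma (2 + \<beta>) > 0" using assms by (intro Gamma_real_pos) auto
  moreover have "Gamma (real n + 2 + \<beta>) > 0" using assms by (intro Gamma_real_pos) auto
  ultimately show ?thesis unfolding bergman_weight_def by (simp add: divide_pos_pos)
qed

lemma weight_poch: assumes "\<beta> > -1"
  shows "bergman_weight \<beta> n = fact n / pochhammer (2 + \<beta>) n"
proof -
  have e: "pochhammer (2+\<beta>) n = Gamma (real n + 2 + \<beta>) / Gamma (2+\<beta>)"
  proof -
    have "2+\<beta> \<notin> \<int>\<^sub>\<le>\<^sub>0" using assms nonpos_Ints_nonpos by force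
    then show ?thesis using pochhammer_Gamma[of "2+\<beta>" n] by (simp add: add_ac)
  qed
  have g: "Gamma (2 + \<beta>) > 0" using assms by (intro Gamma_real_pos) auto
  have g2: "Gamma (real n + 2 + \<beta>) > 0" using assms by (intro Gamma_real_pos) auto
  show ?thesis unfolding bergman_weight_def e using g g2 by (simp add: field_simps)
qed

lemma weight_0: assumes "\<beta> > -1" shows "bergman_weight \<beta> 0 = 1"
  using weight_poch[OF assms, of 0] by simp

lemma weight_Suc_le: assumes "\<beta> > -1" shows "bergman_weight \<beta> (Suc n) \<le> bergman_weight \<beta> n"
proof -
  have p: "pochhammer (2+\<beta>) n > 0" using assms by (intro pochhammer_pos) auto
  have "bergman_weight \<beta> (Suc n) = bergman_weight \<beta> n * ((n+1) / (2 + \<beta> + n))"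
    using p assms unfolding weight_poch[OF assms] by (simp add: pochhammer_Suc field_simps)
  also have "\<dots> \<le> bergman_weight \<beta> n * 1"
    using weight_pos[OF assms, of n] assms by (intro mult_left_mono) (auto simp: field_simps)
  finally show ?thesis by simp
qed

lemma weight_mono: assumes "\<beta> > -1" "m \<le> n" shows "bergman_weight \<beta> n \<le> bergman_weight \<beta> m"
  using assms(2)
proof (induction n)
  case 0 then show ?case by simp
next
  case (Suc n)
  show ?case
  proof (cases "m = Suc n")
    case False
    then have "m \<le> n" using Suc by auto
    then show ?thesis using Suc weight_Suc_le[OF assms(1), of n] by linarith
  qed simp
qed

lemma s_real:
  fixes s :: complex
  assumes "0 < cmod s" and "cmod s < 1"
    and pole: "\<forall>z\<in>ball 0 1. 1 - (1 - s) * z \<noteq> 0"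
    and map: "\<forall>z\<in>ball 0 1. psi s z \<in> ball 0 1"
  shows "\<exists>t::real. s = of_real t \<and> 0 < t \<and> t < 1"
proof -
  define a where "a = 1 - s"
  have key: "cmod (s*z) < cmod (1 - a*z)" if "cmod z < 1" for z
  proof -
    have nz: "1 - a*z \<noteq> 0" using pole that by (auto simp: a_def)
    have "cmod (psi s z) < 1" using map that by auto
    then have "cmod (s*z) / cmod (1 - a*z) < 1" by (simp add: psi_def a_def norm_divide)
    then show ?thesis using nz by (simp add: divide_less_eq)
  qed
  have ima: "Im a = 0"
  proof (rule ccontr)
    assume "Im a \<noteq> 0"
    then have ap: "cmod a > 0" by auto
    define w where "w = cnj a / cmod a"
    have nw: "cmod w = 1" using ap by (simp add: w_def norm_divide)
    have acn: "a * cnj a = of_real ((cmod a)^2)" by (metis complex_norm_square)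
    have aw: "a * w = cmod a"
    proof -
      have "a * w = (a * cnj a) / cmod a" by (simp add: w_def)
      also have "\<dots> = cmod a" using ap by (simp add: acn power2_eq_square)
      finally show ?thesis .
    qed
    have gap: "Re a < cmod a"
    proof -
      have "(Re a)^2 < (cmod a)^2" using \<open>Im a \<noteq> 0\<close> by (simp add: cmod_power2)
      then show ?thesis by (smt (verit) power2_le_imp_le norm_ge_zero)
    qed
    define A where "A = cmod a"
    define B where "B = 1 - 2 * Re s"
    define F where "F = (\<lambda>r::real. 1 - 2*r*A + r^2 * B)"
    have Fpos: "F r > 0" if "0 \<le> r" "r < 1" for r
    proof -
      have "cmod (s * (r*w)) < cmod (1 - a*(r*w))" using key[of "r*w"] that nw by (simp add: norm_mult)
      then have "(cmod (s * (r*w)))^2 < (cmod (1 - a*(r*w)))^2"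
        by (intro power_strict_mono) auto
      moreover have "(cmod (s * (r*w)))^2 = r^2 * (cmod s)^2" using nw that by (simp add: norm_mult power_mult_distrib)
      moreover have "cmod (1 - a*(r*w)) = \<bar>1 - r*A\<bar>"
      proof -
        have "1 - a*(r*w) = of_real (1 - r*A)" using aw by (simp add: A_def algebra_simps)
        then show ?thesis by (simp only: norm_of_real)
      qed
      moreover have "(cmod a)^2 - (cmod s)^2 = B"
        unfolding a_def B_def cmod_power2 by (simp add: power2_eq_square algebra_simps)
      ultimately have "r^2 * (cmod s)^2 < (1 - r*A)^2" by (simp add: power2_abs)
      then show ?thesis using \<open>(cmod a)^2 - (cmod s)^2 = B\<close> unfolding F_def A_def
        by (simp add: power2_eq_square algebra_simps)
    qed
    have F1: "F 1 = 2 * (Re a - A)" by (simp add: F_def B_def a_def)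
    have F1n: "F 1 < 0" using gap F1 A_def by simp
    define d where "d = - F 1"
    have dpos: "d > 0" using F1n d_def by simp
    define r where "r = 1 - d / (2 * (2*\<bar>A\<bar> + 2*\<bar>B\<bar> + 1))"
    have den: "2 * (2*\<bar>A\<bar> + 2*\<bar>B\<bar> + 1) > 0" by simp
    have dle: "d \<le> 2*\<bar>A\<bar> + 2*\<bar>B\<bar> + 1"
    proof -
      have "d = 2*A - 1 - B" by (simp add: d_def F_def)
      then show ?thesis by linarith
    qed
    have r0: "0 \<le> r" and r1: "r < 1"
      using dpos den dle by (auto simp: r_def field_simps)
    define e where "e = 1 - r"
    have e0: "0 < e" "e \<le> d / (2 * (2*\<bar>A\<bar> + 2*\<bar>B\<bar> + 1))" using r1 by (auto simp: e_def r_def)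
    have "F r = F 1 + e * (2*A - B * (2 - e))" by (simp add: F_def e_def power2_eq_square algebra_simps)
    moreover have "e * (2*A - B * (2 - e)) \<le> e * (2*\<bar>A\<bar> + 2*\<bar>B\<bar>)"
    proof (intro mult_left_mono)
      have "e \<le> 1" using r0 e_def by simp
      then have "\<bar>B * (2 - e)\<bar> \<le> 2*\<bar>B\<bar>" using e0
      proof -
        have "\<bar>2 - e\<bar> \<le> 2" using e0 \<open>e \<le> 1\<close> by simp
        then have "\<bar>B\<bar> * \<bar>2 - e\<bar> \<le> \<bar>B\<bar> * 2" by (intro mult_left_mono) auto
        then show ?thesis by (simp add: abs_mult)
      qed
      then show "2*A - B * (2 - e) \<le> 2*\<bar>A\<bar> + 2*\<bar>B\<bar>" by linarith
    qed (use e0 in auto)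
    moreover have "e * (2*\<bar>A\<bar> + 2*\<bar>B\<bar>) \<le> d/2"
    proof -
      have "e * (2*\<bar>A\<bar> + 2*\<bar>B\<bar>) \<le> e * (2*\<bar>A\<bar> + 2*\<bar>B\<bar> + 1)" using e0 by simp
      also have "\<dots> \<le> d / (2 * (2*\<bar>A\<bar> + 2*\<bar>B\<bar> + 1)) * (2*\<bar>A\<bar> + 2*\<bar>B\<bar> + 1)"
        using e0 by (intro mult_right_mono) auto
      also have "\<dots> = d/2" by (simp add: field_simps)
      finally show ?thesis .
    qed
    ultimately have "F r \<le> F 1 + d/2" by linarith
    then have "F r < 0" using dpos d_def by simp
    with Fpos[OF r0 r1] show False by simp
  qed
  define t where "t = Re s"
  have st: "s = of_real t" using ima by (simp add: a_def t_def complex_eq_iff)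
  have t0: "t \<noteq> 0" using assms(1) st by auto
  have t1: "\<bar>t\<bar> < 1" using assms(2) st by simp
  have "t > 0"
  proof (rule ccontr)
    assume "\<not> t > 0"
    then have tn: "t < 0" using t0 by simp
    define z where "z = 1 / (1 - t)"
    have "\<bar>z\<bar> < 1" using tn by (simp add: z_def)
    then have "cmod (of_real z) < 1" by simp
    then have "1 - (1 - s) * of_real z \<noteq> 0" using pole by auto
    moreover have "1 - (1 - s) * of_real z = 0" using tn by (simp add: st z_def field_simps)
    ultimately show False by simp
  qed
  then show ?thesis using st t1 by auto
qed



lemma A2_norm_sq: assumes "\<beta> > -1" "h \<in> A2 \<beta>"
  shows "(A2_norm \<beta> h)^2 = (\<Sum>n. bergman_weight \<beta> n * (cmod (taylor_coeff h n))\<^sup>2)"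
proof -
  have sm: "summable (\<lambda>n. bergman_weight \<beta> n * (cmod (taylor_coeff h n))\<^sup>2)"
    using assms by (simp add: A2_def)
  have "(\<Sum>n. bergman_weight \<beta> n * (cmod (taylor_coeff h n))\<^sup>2) \<ge> 0"
    by (rule suminf_nonneg[OF sm]) (use weight_pos[OF assms(1)] in \<open>simp add: less_imp_le\<close>)
  then show ?thesis by (simp add: A2_norm_def)
qed

lemma A2_norm_nonneg: assumes "\<beta> > -1" "h \<in> A2 \<beta>" shows "A2_norm \<beta> h \<ge> 0"
proof -
  have sm: "summable (\<lambda>n. bergman_weight \<beta> n * (cmod (taylor_coeff h n))\<^sup>2)"
    using assms by (simp add: A2_def)
  have "(\<Sum>n. bergman_weight \<beta> n * (cmod (taylor_coeff h n))\<^sup>2) \<ge> 0"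
    by (rule suminf_nonneg[OF sm]) (use weight_pos[OF assms(1)] in \<open>simp add: less_imp_le\<close>)
  then show ?thesis by (simp add: A2_norm_def)
qed

lemma A2_partial_le: assumes "\<beta> > -1" "h \<in> A2 \<beta>"
  shows "(\<Sum>n\<in>I. bergman_weight \<beta> n * (cmod (taylor_coeff h n))\<^sup>2) \<le> (A2_norm \<beta> h)^2"
proof (cases "finite I")
  case True
  have sm: "summable (\<lambda>n. bergman_weight \<beta> n * (cmod (taylor_coeff h n))\<^sup>2)"
    using assms by (simp add: A2_def)
  show ?thesis unfolding A2_norm_sq[OF assms]
    using weight_pos[OF assms(1)] by (intro sum_le_suminf[OF sm True]) (auto simp: less_imp_le)
qed simp

lemma coef_bound: assumes "\<beta> > -1" "h \<in> A2 \<beta>"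
  shows "bergman_weight \<beta> n * (cmod (taylor_coeff h n))\<^sup>2 \<le> (A2_norm \<beta> h)^2"
  using A2_partial_le[OF assms, of "{n}"] by simp

lemma inv_weight_sums: assumes "\<beta> > -1" "0 \<le> x" "x < 1"
  shows "(\<lambda>n. x^n / bergman_weight \<beta> n) sums ((1 - x) powr (-(2+\<beta>)))"
proof -
  have "(\<lambda>n. ((-(2+\<beta>)) gchoose n) * (-x)^n) sums (1 + (-x)) powr (-(2+\<beta>))"
    using assms by (intro gen_binomial_real) auto
  moreover have "((-(2+\<beta>)) gchoose n) * (-x)^n = x^n / bergman_weight \<beta> n" for n
  proof -
    have p: "pochhammer (2+\<beta>) n > 0" using assms by (intro pochhammer_pos) auto
    have m1: "((-1::real)^n * (-1)^n) = 1" by (simp flip: power_mult_distrib)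
    have "((-(2+\<beta>)) gchoose n) * (-x)^n = ((-1)^n * (-1)^n) * pochhammer (2+\<beta>) n / fact n * x^n"
      by (simp add: gbinomial_pochhammer power_minus[of x] add.commute)
    also have "\<dots> = pochhammer (2+\<beta>) n / fact n * x^n" by (simp add: m1)
    also have "\<dots> = x^n / bergman_weight \<beta> n"
      using p by (simp add: weight_poch[OF assms(1)] power_mult_distrib[symmetric] field_simps)
    finally show ?thesis .
  qed
  ultimately show ?thesis by simp
qed

lemma taylor_sums: assumes "h holomorphic_on ball 0 1" "cmod z < 1"
  shows "(\<lambda>n. taylor_coeff h n * z^n) sums h z"
  using holomorphic_power_series[OF assms(1), of z] assms(2) by (simp add: taylor_coeff_def)

lemma pointwise_bound: assumes "\<beta> > -1" "h \<in> A2 \<beta>" "cmod z < 1"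
  shows "cmod (h z) \<le> A2_norm \<beta> h * sqrt ((1 - (cmod z)^2) powr (-(2+\<beta>)))"
proof -
  define a where "a = taylor_coeff h"
  define w where "w = bergman_weight \<beta>"
  define x where "x = (cmod z)^2"
  have wp: "w n > 0" for n using weight_pos[OF assms(1)] by (simp add: w_def)
  have wn0: "w n \<noteq> 0" "sqrt (w n) \<noteq> 0" for n using wp[of n] by auto
  have x: "0 \<le> x" "x < 1" using assms(3) by (auto simp: x_def power_less_one_iff abs_square_less_1)
  have S: "(\<lambda>n. x^n / w n) sums ((1 - x) powr (-(2+\<beta>)))"
    using inv_weight_sums[OF assms(1) x] by (simp add: w_def)
  have hol: "h holomorphic_on ball 0 1" using assms(2) by (simp add: A2_def)
  have sm: "(\<lambda>n. a n * z^n) sums h z" using taylor_sums[OF hol assms(3)] by (simp add: a_def)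
  have bound: "cmod (\<Sum>n<N. a n * z^n) \<le> A2_norm \<beta> h * sqrt ((1 - x) powr (-(2+\<beta>)))" for N
  proof -
    define Sa where "Sa = (\<Sum>n<N. w n * (cmod (a n))^2)"
    define Sx where "Sx = (\<Sum>n<N. x^n / w n)"
    have "cmod (\<Sum>n<N. a n * z^n) \<le> (\<Sum>n<N. cmod (a n) * cmod z ^ n)"
      by (rule order_trans[OF norm_sum]) (simp add: norm_mult norm_power)
    also have "\<dots> = (\<Sum>n<N. (sqrt (w n) * cmod (a n)) * (cmod z ^ n / sqrt (w n)))"
      using wn0 by (intro sum.cong) (auto simp: field_simps)
    also have "\<dots> \<le> sqrt (\<Sum>n<N. (sqrt (w n) * cmod (a n))^2) * sqrt (\<Sum>n<N. (cmod z ^ n / sqrt (w n))^2)"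
    proof -
      have "(\<Sum>n<N. (sqrt (w n) * cmod (a n)) * (cmod z ^ n / sqrt (w n)))^2
          \<le> (\<Sum>n<N. (sqrt (w n) * cmod (a n))^2) * (\<Sum>n<N. (cmod z ^ n / sqrt (w n))^2)"
        by (rule Cauchy_Schwarz_ineq_sum)
      then have "sqrt ((\<Sum>n<N. (sqrt (w n) * cmod (a n)) * (cmod z ^ n / sqrt (w n)))^2)
          \<le> sqrt ((\<Sum>n<N. (sqrt (w n) * cmod (a n))^2) * (\<Sum>n<N. (cmod z ^ n / sqrt (w n))^2))"
        by (rule real_sqrt_le_mono)
      then show ?thesis unfolding real_sqrt_abs real_sqrt_mult by linarith
    qed
    also have "(\<Sum>n<N. (sqrt (w n) * cmod (a n))^2) = Sa"
      unfolding Sa_def using wp by (intro sum.cong) (auto simp: power_mult_distrib less_imp_le)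
    also have "(\<Sum>n<N. (cmod z ^ n / sqrt (w n))^2) = Sx"
      unfolding Sx_def using wp by (intro sum.cong) (auto simp: power_divide x_def less_imp_le power_mult[symmetric] mult.commute)
    finally have c1: "cmod (\<Sum>n<N. a n * z^n) \<le> sqrt Sa * sqrt Sx" .
    have "Sa \<le> (A2_norm \<beta> h)^2"
      using A2_partial_le[OF assms(1,2), of "{..<N}"] by (simp add: w_def a_def Sa_def)
    then have c2: "sqrt Sa \<le> A2_norm \<beta> h"
      using real_sqrt_le_mono[of Sa "(A2_norm \<beta> h)^2"] A2_norm_nonneg[OF assms(1,2)] by simp
    have "Sx \<le> (1 - x) powr (-(2+\<beta>))"
      unfolding Sx_def using S wp x
      by (intro sum_le_suminf[of _ "{..<N}", THEN order_trans]) (auto simp: sums_iff intro!: divide_nonneg_pos)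
    then have c3: "sqrt Sx \<le> sqrt ((1 - x) powr (-(2+\<beta>)))" by (rule real_sqrt_le_mono)
    have "sqrt Sa * sqrt Sx \<le> A2_norm \<beta> h * sqrt ((1 - x) powr (-(2+\<beta>)))"
      by (rule mult_mono[OF c2 c3]) (use A2_norm_nonneg[OF assms(1,2)] in \<open>auto simp: Sx_def wp x less_imp_le intro!: sum_nonneg divide_nonneg_pos\<close>)
    with c1 show ?thesis by linarith
  qed
  have "(\<lambda>N. cmod (\<Sum>n<N. a n * z^n)) \<longlonglongrightarrow> cmod (h z)"
    using sm by (intro tendsto_norm) (simp add: sums_def)
  then have "cmod (h z) \<le> A2_norm \<beta> h * sqrt ((1 - x) powr (-(2+\<beta>)))"
    by (rule LIMSEQ_le_const2) (use bound in auto)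
  then show ?thesis by (simp add: x_def)
qed



definition nnr :: "complex \<Rightarrow> bool" where "nnr z \<longleftrightarrow> Im z = 0 \<and> Re z \<ge> 0"

lemma nnr_add: "nnr a \<Longrightarrow> nnr b \<Longrightarrow> nnr (a + b)" by (simp add: nnr_def)
lemma nnr_mult: "nnr a \<Longrightarrow> nnr b \<Longrightarrow> nnr (a * b)" by (simp add: nnr_def)
lemma nnr_0: "nnr 0" by (simp add: nnr_def)
lemma nnr_sum: "(\<And>i. i \<in> I \<Longrightarrow> nnr (f i)) \<Longrightarrow> nnr (\<Sum>i\<in>I. f i)"
  by (induction I rule: infinite_finite_induct) (auto simp: nnr_0 nnr_add)
lemma nnr_of_real: "nnr z \<Longrightarrow> z = of_real (Re z)" by (simp add: nnr_def complex_eq_iff)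

lemma inv_geom: "inverse (1 - fps_const (c::complex) * fps_X) = Abs_fps (\<lambda>n. c^n)"
proof (rule fps_inverse_unique)
  show "(1 - fps_const c * fps_X) * Abs_fps (\<lambda>n. c^n) = 1"
  proof (subst fps_eq_iff, intro allI)
    fix n show "((1 - fps_const c * fps_X) * Abs_fps (\<lambda>n. c^n)) $ n = 1 $ n"
      by (cases n) (simp_all add: ring_distribs mult.assoc)
  qed
qed

definition Gs :: "real \<Rightarrow> complex fps" where
  "Gs t = fps_const (of_real t) * fps_X * Abs_fps (\<lambda>n. (1 - of_real t)^n)"

lemma Gs_nth: "Gs t $ n = (if n = 0 then 0 else of_real t * (1 - of_real t)^(n-1))"
  by (simp add: Gs_def mult.assoc)

lemma Gs_0: "Gs t $ 0 = 0" by (simp add: Gs_nth)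

lemma psi_den_nz: assumes "0 < t" "t < 1" "cmod z < 1 / (1 - t)"
  shows "1 - (1 - of_real t) * z \<noteq> 0"
proof -
  have e: "(1 - complex_of_real t) = of_real (1 - t)" by simp
  have "cmod ((1 - of_real t) * z) = (1 - t) * cmod z" using assms unfolding e norm_mult norm_of_real by simp
  also have "\<dots> < 1" using assms by (simp add: field_simps)
  finally show ?thesis by auto
qed

lemma psi_holo: assumes "0 < t" "t < 1"
  shows "psi (of_real t) holomorphic_on ball 0 (1 / (1 - t))"
  unfolding psi_def using psi_den_nz[OF assms] by (intro holomorphic_intros) auto

lemma psi_fps: assumes "0 < t" "t < 1"
  shows "psi (of_real t) has_fps_expansion Gs t"
proof -
  have "(\<lambda>z::complex. of_real t * z * inverse (1 - (1 - of_real t) * z)) has_fps_expansion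
        fps_const (of_real t) * fps_X * inverse (1 - fps_const (1 - of_real t) * fps_X)"
    apply (rule has_fps_expansion_mult[where f="\<lambda>z. of_real t * z" and g="\<lambda>z. inverse (1 - (1 - of_real t) * z)"])
     apply (rule has_fps_expansion_cmult_left[OF has_fps_expansion_fps_X])
    apply (rule has_fps_expansion_inverse[where f="\<lambda>z. 1 - (1 - of_real t) * z"])
     apply (rule has_fps_expansion_diff[OF has_fps_expansion_1])
     apply (rule has_fps_expansion_cmult_left[OF has_fps_expansion_fps_X])
    apply simp
    done
  moreover have "(\<lambda>z. of_real t * z * inverse (1 - (1 - of_real t) * z)) = psi (of_real t)"
    by (rule ext) (simp add: psi_def divide_inverse)
  ultimately show ?thesis by (simp add: inv_geom Gs_def)
qed

lemma Gs_nnr: assumes "0 \<le> t" "t \<le> 1" shows "nnr (Gs t $ n)"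
  using assms by (simp add: Gs_nth nnr_def)

lemma Gs_pow_nnr: assumes "0 \<le> t" "t \<le> 1" shows "nnr ((Gs t ^ i) $ n)"
proof (induction i arbitrary: n)
  case 0 then show ?case by (simp add: nnr_def)
next
  case (Suc i)
  show ?case unfolding power_Suc fps_mult_nth
    by (intro nnr_sum nnr_mult Gs_nnr[OF assms] Suc)
qed

lemma Gs_pow_zero: "n < i \<Longrightarrow> (Gs t ^ i) $ n = 0"
  using startsby_zero_power_prefix[of "Gs t" i] Gs_0 by auto

lemma psi_one: "psi (of_real t) 1 = 1" if "t \<noteq> 0" using that by (simp add: psi_def)

lemma col_sums: assumes "0 < t" "t < 1"
  shows "(\<lambda>n. (Gs t ^ i) $ n) sums 1"
proof -
  have e: "(\<lambda>z. psi (of_real t) z ^ i) has_fps_expansion Gs t ^ i"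
    by (intro has_fps_expansion_power psi_fps assms)
  have h: "(\<lambda>z. psi (of_real t) z ^ i) holomorphic_on eball 0 (ereal (1 / (1 - t)))"
    using psi_holo[OF assms] by (auto intro!: holomorphic_intros)
  have "ereal (cmod (1::complex)) < ereal (1 / (1 - t))" using assms by (simp add: field_simps)
  from has_fps_expansion_imp_sums_complex[OF e h this]
  show ?thesis using psi_one[of t] assms by simp
qed

lemma row_sum: assumes "0 < t" "t < 1"
  shows "(\<Sum>i=0..n. (Gs t ^ i) $ n) = (if n = 0 then 1 else of_real t)"
proof -
  have e1: "(\<lambda>w::complex. inverse (1 - 1 * w)) has_fps_expansion inverse (1 - fps_const 1 * fps_X)"
    apply (rule has_fps_expansion_inverse[where f="\<lambda>z. 1 - 1 * z"])
     apply (rule has_fps_expansion_diff[OF has_fps_expansion_1])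
     apply (rule has_fps_expansion_cmult_left[OF has_fps_expansion_fps_X])
    apply simp
    done
  have e1': "(\<lambda>w::complex. inverse (1 - w)) has_fps_expansion Abs_fps (\<lambda>n. 1)"
    using e1 by (simp add: inv_geom[of 1, simplified])
  have e2: "((\<lambda>w. inverse (1 - w)) \<circ> psi (of_real t)) has_fps_expansion (Abs_fps (\<lambda>n. 1) oo Gs t)"
    by (rule has_fps_expansion_compose[OF e1' psi_fps[OF assms] Gs_0])
  have e3: "(\<lambda>z::complex. 1 + of_real t * z * inverse (1 - 1 * z)) has_fps_expansion
      1 + fps_const (of_real t) * fps_X * inverse (1 - fps_const 1 * fps_X)"
    apply (rule has_fps_expansion_add[OF has_fps_expansion_1])
    apply (rule has_fps_expansion_mult[where f="\<lambda>z::complex. of_real t * z" and g="\<lambda>z::complex. inverse (1 - 1 * z)"])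
     apply (rule has_fps_expansion_cmult_left[OF has_fps_expansion_fps_X])
    apply (rule has_fps_expansion_inverse[where f="\<lambda>z::complex. 1 - 1 * z"])
     apply (rule has_fps_expansion_diff[OF has_fps_expansion_1])
     apply (rule has_fps_expansion_cmult_left[OF has_fps_expansion_fps_X])
    apply simp
    done
  have ev: "eventually (\<lambda>z. ((\<lambda>w. inverse (1 - w)) \<circ> psi (of_real t)) z = 1 + of_real t * z * inverse (1 - z)) (nhds 0)"
  proof -
    have "eventually (\<lambda>z. z \<in> ball (0::complex) 1) (nhds 0)"
      by (intro eventually_nhds_in_open) auto
    then show ?thesis
    proof (rule eventually_mono)
      fix z :: complex assume z: "z \<in> ball 0 1"
      have "1 \<le> 1 / (1 - t)" using assms by (simp add: field_simps)
      then have "cmod z < 1 / (1 - t)" using z by simp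
      then have d: "1 - (1 - of_real t) * z \<noteq> 0" by (rule psi_den_nz[OF assms])
      have z1: "1 - z \<noteq> 0" using z by auto
      show "((\<lambda>w. inverse (1 - w)) \<circ> psi (of_real t)) z = 1 + of_real t * z * inverse (1 - z)"
        using d z1 by (simp add: psi_def field_simps)
    qed
  qed
  have e4: "((\<lambda>w. inverse (1 - w)) \<circ> psi (of_real t)) has_fps_expansion
      1 + fps_const (of_real t) * fps_X * inverse (1 - fps_const 1 * fps_X)"
    using has_fps_expansion_cong[OF ev refl] e3 by (simp add: o_def)
  have eq: "(Abs_fps (\<lambda>n. 1) oo Gs t) = 1 + fps_const (of_real t) * fps_X * inverse (1 - fps_const 1 * fps_X)"
    by (rule fps_expansion_unique_complex[OF e2 e4])
  have "(\<Sum>i=0..n. (Gs t ^ i) $ n) = (Abs_fps (\<lambda>n. 1) oo Gs t) $ n"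
    by (simp add: fps_compose_nth)
  also have "\<dots> = (if n = 0 then 1 else of_real t)"
    unfolding eq by (simp add: inv_geom[of 1, simplified] mult.assoc)
  finally show ?thesis .
qed



lemma psi_maps: assumes "0 < t" "t < 1" "cmod z < 1"
  shows "psi (of_real t) z \<in> ball 0 1" "1 - (1 - of_real t) * z \<noteq> 0"
proof -
  have e: "(1 - complex_of_real t) = of_real (1 - t)" by simp
  have "cmod (1 - (1 - of_real t) * z) \<ge> 1 - (1 - t) * cmod z"
  proof -
    have "cmod ((1 - of_real t) * z) = (1 - t) * cmod z" using assms unfolding e norm_mult norm_of_real by simp
    then show ?thesis using norm_triangle_ineq2[of 1 "(1 - of_real t) * z"] by simp
  qed
  moreover have "1 - (1 - t) * cmod z > t * cmod z" using assms by (simp add: algebra_simps)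
  ultimately have lt: "cmod (of_real t * z) < cmod (1 - (1 - of_real t) * z)"
    using assms by (simp add: norm_mult)
  have "t * cmod z \<ge> 0" using assms by simp
  show nz: "1 - (1 - of_real t) * z \<noteq> 0"
  proof
    assume "1 - (1 - of_real t) * z = 0"
    then have "cmod (of_real t * z) < 0" using lt by simp
    then show False by simp
  qed
  show "psi (of_real t) z \<in> ball 0 1"
    using lt nz by (simp add: psi_def norm_divide divide_less_eq)
qed

lemma comp_holo: assumes "0 < t" "t < 1" "f holomorphic_on ball 0 1"
  shows "(f \<circ> psi (of_real t)) holomorphic_on ball 0 1"
proof (rule holomorphic_on_compose_gen[OF _ assms(3)])
  show "psi (of_real t) holomorphic_on ball 0 1"
    unfolding psi_def using psi_maps[OF assms(1,2)] by (intro holomorphic_intros) auto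
  show "psi (of_real t) ` ball 0 1 \<subseteq> ball 0 1" using psi_maps[OF assms(1,2)] by auto
qed

lemma holo_fps: assumes "f holomorphic_on ball 0 1"
  shows "f has_fps_expansion fps_expansion f 0" "\<And>n. fps_expansion f 0 $ n = taylor_coeff f n"
proof -
  have "f analytic_on ball 0 1" using assms by (simp add: analytic_on_open)
  then have "f analytic_on {0}" by (rule analytic_on_subset) auto
  then show e: "f has_fps_expansion fps_expansion f 0" by (rule analytic_at_imp_has_fps_expansion_0)
  show "\<And>n. fps_expansion f 0 $ n = taylor_coeff f n"
    using fps_nth_fps_expansion[OF e] by (simp add: taylor_coeff_def)
qed

lemma comp_coeff: assumes "0 < t" "t < 1" "f holomorphic_on ball 0 1"
  shows "taylor_coeff (f \<circ> psi (of_real t)) n = (\<Sum>i=0..n. taylor_coeff f i * (Gs t ^ i) $ n)"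
proof -
  have e: "(f \<circ> psi (of_real t)) has_fps_expansion (fps_expansion f 0 oo Gs t)"
    by (rule has_fps_expansion_compose[OF holo_fps(1)[OF assms(3)] psi_fps[OF assms(1,2)] Gs_0])
  have "taylor_coeff (f \<circ> psi (of_real t)) n = (fps_expansion f 0 oo Gs t) $ n"
    using fps_nth_fps_expansion[OF e] by (simp add: taylor_coeff_def)
  also have "\<dots> = (\<Sum>i=0..n. taylor_coeff f i * (Gs t ^ i) $ n)"
    by (simp add: fps_compose_nth holo_fps(2)[OF assms(3)])
  finally show ?thesis .
qed

lemma comp_A2: assumes "\<beta> > -1" "0 < t" "t < 1" "f \<in> A2 \<beta>"
  shows "f \<circ> psi (of_real t) \<in> A2 \<beta>"
proof -
  have hol: "f holomorphic_on ball 0 1" using assms(4) by (simp add: A2_def)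
  define w where "w = bergman_weight \<beta>"
  define A where "A = (\<lambda>i. cmod (taylor_coeff f i))"
  define p where "p = (\<lambda>n i. Re ((Gs t ^ i) $ n))"
  have pnn: "p n i \<ge> 0" for n i using Gs_pow_nnr[of t i n] assms by (simp add: p_def nnr_def)
  have peq: "(Gs t ^ i) $ n = of_real (p n i)" for n i
    using nnr_of_real[OF Gs_pow_nnr[of t i n]] assms by (simp add: p_def)
  have p0: "p n i = 0" if "n < i" for n i using Gs_pow_zero[OF that] by (simp add: p_def)
  have wp: "w n > 0" for n using weight_pos[OF assms(1)] by (simp add: w_def)
  have row: "(\<Sum>i=0..n. p n i) \<le> 1" for n
  proof -
    have "(\<Sum>i=0..n. p n i) = Re (\<Sum>i=0..n. (Gs t ^ i) $ n)" by (simp add: p_def)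
    also have "\<dots> \<le> 1" using row_sum[OF assms(2,3), of n] assms by auto
    finally show ?thesis .
  qed
  have col: "(\<Sum>n<N. p n i) \<le> 1" for N i
  proof -
    have "(\<lambda>n. p n i) sums 1" using sums_Re[OF col_sums[OF assms(2,3), of i]] by (simp add: p_def)
    then show ?thesis using pnn by (intro sum_le_suminf[of _ "{..<N}", THEN order_trans]) (auto simp: sums_iff)
  qed
  define B where "B = (\<lambda>n. cmod (taylor_coeff (f \<circ> psi (of_real t)) n))"
  have Bb: "(B n)^2 \<le> (\<Sum>i=0..n. p n i * (A i)^2)" for n
  proof -
    have "B n = cmod (\<Sum>i=0..n. taylor_coeff f i * of_real (p n i))"
      by (simp add: B_def comp_coeff[OF assms(2,3) hol] peq)
    also have "\<dots> \<le> (\<Sum>i=0..n. A i * p n i)"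
      by (rule order_trans[OF norm_sum]) (simp add: A_def norm_mult pnn)
    finally have b1: "B n \<le> (\<Sum>i=0..n. A i * p n i)" .
    have "(\<Sum>i=0..n. A i * p n i) = (\<Sum>i=0..n. sqrt (p n i) * (sqrt (p n i) * A i))"
    proof (intro sum.cong refl)
      fix i
      have "sqrt (p n i) * (sqrt (p n i) * A i) = (sqrt (p n i) * sqrt (p n i)) * A i" by (simp only: mult.assoc)
      also have "\<dots> = A i * p n i" using pnn[of n i] by (simp add: abs_of_nonneg)
      finally show "A i * p n i = sqrt (p n i) * (sqrt (p n i) * A i)" by (rule sym)
    qed
    also have "(\<dots>)^2 \<le> (\<Sum>i=0..n. (sqrt (p n i))^2) * (\<Sum>i=0..n. (sqrt (p n i) * A i)^2)"
      by (rule Cauchy_Schwarz_ineq_sum)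
    also have "\<dots> = (\<Sum>i=0..n. p n i) * (\<Sum>i=0..n. p n i * (A i)^2)"
      using pnn by (simp add: power_mult_distrib)
    also have "\<dots> \<le> 1 * (\<Sum>i=0..n. p n i * (A i)^2)"
      using row pnn by (intro mult_right_mono) (auto intro!: sum_nonneg)
    finally have b2: "(\<Sum>i=0..n. A i * p n i)^2 \<le> (\<Sum>i=0..n. p n i * (A i)^2)" by simp
    have "B n \<ge> 0" by (simp add: B_def)
    then have "(B n)^2 \<le> (\<Sum>i=0..n. A i * p n i)^2" using b1 by (intro power_mono) auto
    with b2 show ?thesis by linarith
  qed
  have part: "(\<Sum>n<N. w n * (B n)^2) \<le> (A2_norm \<beta> f)^2" for N
  proof -
    have "(\<Sum>n<N. w n * (B n)^2) \<le> (\<Sum>n<N. w n * (\<Sum>i<N. p n i * (A i)^2))"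
    proof (intro sum_mono mult_left_mono)
      fix n assume n: "n \<in> {..<N}"
      have "(\<Sum>i=0..n. p n i * (A i)^2) = (\<Sum>i<N. p n i * (A i)^2)"
        using n p0 by (intro sum.mono_neutral_left) auto
      then show "(B n)^2 \<le> (\<Sum>i<N. p n i * (A i)^2)" using Bb[of n] by simp
    qed (use wp in \<open>auto simp: less_imp_le\<close>)
    also have "\<dots> = (\<Sum>n<N. \<Sum>i<N. w n * p n i * (A i)^2)"
      by (simp add: sum_distrib_left mult.assoc)
    also have "\<dots> = (\<Sum>i<N. \<Sum>n<N. w n * p n i * (A i)^2)"
      by (rule sum.swap)
    also have "\<dots> \<le> (\<Sum>i<N. \<Sum>n<N. w i * p n i * (A i)^2)"
    proof (intro sum_mono)
      fix i n
      have "w n * p n i \<le> w i * p n i"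
      proof (cases "n < i")
        case True then show ?thesis using p0 by simp
      next
        case False
        then have "w n \<le> w i" using weight_mono[OF assms(1), of i n] by (simp add: w_def)
        then show ?thesis using pnn by (intro mult_right_mono) auto
      qed
      then show "w n * p n i * (A i)^2 \<le> w i * p n i * (A i)^2" by (rule mult_right_mono) simp
    qed
    also have "\<dots> = (\<Sum>i<N. w i * (A i)^2 * (\<Sum>n<N. p n i))"
      by (intro sum.cong refl) (simp add: sum_distrib_left mult_ac)
    also have "\<dots> \<le> (\<Sum>i<N. w i * (A i)^2 * 1)"
      using col wp by (intro sum_mono mult_left_mono) (auto simp: less_imp_le)
    also have "\<dots> \<le> (A2_norm \<beta> f)^2"
      using A2_partial_le[OF assms(1,4), of "{..<N}"] by (simp add: w_def A_def)
    finally show ?thesis .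
  qed
  have "summable (\<lambda>n. w n * (B n)^2)"
    using part wp by (intro summableI_nonneg_bounded) (auto simp: less_imp_le)
  then show ?thesis using comp_holo[OF assms(2,3) hol]
    by (simp add: A2_def w_def B_def)
qed



lemma taylor_coeff_lin: assumes "F holomorphic_on ball 0 r" "G holomorphic_on ball 0 r" "r > 0"
  shows "taylor_coeff (\<lambda>z. F z - a * G z) n = taylor_coeff F n - a * taylor_coeff G n"
proof -
  have h2: "(\<lambda>z. a * G z) holomorphic_on ball 0 r" using assms by (intro holomorphic_intros)
  have "(deriv ^^ n) (\<lambda>z. F z - a * G z) 0 = (deriv ^^ n) F 0 - (deriv ^^ n) (\<lambda>z. a * G z) 0"
    by (rule higher_deriv_diff[OF assms(1) h2]) (use assms in auto)
  also have "(deriv ^^ n) (\<lambda>z. a * G z) 0 = a * (deriv ^^ n) G 0"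
    by (rule higher_deriv_cmult[OF assms(2)]) (use assms in auto)
  finally show ?thesis by (simp add: taylor_coeff_def diff_divide_distrib)
qed

lemma A2_lin: assumes "\<beta> > -1" "F \<in> A2 \<beta>" "G \<in> A2 \<beta>"
  shows "(\<lambda>z. F z - a * G z) \<in> A2 \<beta>"
proof -
  have hF: "F holomorphic_on ball 0 1" and hG: "G holomorphic_on ball 0 1"
    using assms by (auto simp: A2_def)
  have hol: "(\<lambda>z. F z - a * G z) holomorphic_on ball 0 1" using hF hG by (intro holomorphic_intros)
  define w where "w = bergman_weight \<beta>"
  have wp: "w n > 0" for n using weight_pos[OF assms(1)] by (simp add: w_def)
  have sF: "summable (\<lambda>n. w n * (cmod (taylor_coeff F n))\<^sup>2)"
    and sG: "summable (\<lambda>n. w n * (cmod (taylor_coeff G n))\<^sup>2)" using assms by (auto simp: A2_def w_def)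
  have bnd: "norm (w n * (cmod (taylor_coeff (\<lambda>z. F z - a * G z) n))\<^sup>2)
      \<le> 2 * (w n * (cmod (taylor_coeff F n))\<^sup>2) + 2 * (cmod a)^2 * (w n * (cmod (taylor_coeff G n))\<^sup>2)" for n
  proof -
    define x where "x = cmod (taylor_coeff F n)"
    define y where "y = cmod (taylor_coeff G n)"
    have "cmod (taylor_coeff (\<lambda>z. F z - a * G z) n) = cmod (taylor_coeff F n - a * taylor_coeff G n)"
      by (simp add: taylor_coeff_lin[OF hF hG])
    also have "\<dots> \<le> x + cmod a * y"
      unfolding x_def y_def by (rule order_trans[OF norm_triangle_ineq4]) (simp add: norm_mult)
    finally have le: "cmod (taylor_coeff (\<lambda>z. F z - a * G z) n) \<le> x + cmod a * y" .
    have "(cmod (taylor_coeff (\<lambda>z. F z - a * G z) n))\<^sup>2 \<le> (x + cmod a * y)^2"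
      by (rule power_mono[OF le]) simp
    also have "\<dots> \<le> 2 * x^2 + 2 * (cmod a)^2 * y^2"
    proof -
      have e: "(x + cmod a * y)^2 = 2 * x^2 + 2 * (cmod a)^2 * y^2 - (x - cmod a * y)^2"
        by (simp add: power2_eq_square algebra_simps)
      have "(x - cmod a * y)^2 \<ge> 0" by simp
      then show ?thesis unfolding e by linarith
    qed
    finally have "(cmod (taylor_coeff (\<lambda>z. F z - a * G z) n))\<^sup>2 \<le> 2 * x^2 + 2 * (cmod a)^2 * y^2" .
    then have "w n * (cmod (taylor_coeff (\<lambda>z. F z - a * G z) n))\<^sup>2 \<le> w n * (2 * x^2 + 2 * (cmod a)^2 * y^2)"
      using wp by (intro mult_left_mono) (auto simp: less_imp_le)
    then show ?thesis using wp by (simp add: x_def y_def algebra_simps abs_of_nonneg less_imp_le)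
  qed
  have "summable (\<lambda>n. w n * (cmod (taylor_coeff (\<lambda>z. F z - a * G z) n))\<^sup>2)"
    by (rule summable_comparison_test'[OF _ bnd]) (intro summable_add summable_mult sF sG)
  then show ?thesis using hol by (simp add: A2_def w_def)
qed

definition gv :: "(complex \<Rightarrow> complex) \<Rightarrow> complex \<Rightarrow> complex" where
  "gv f v = f (v / (1 + v))"

definition bco :: "(complex \<Rightarrow> complex) \<Rightarrow> nat \<Rightarrow> complex" where
  "bco f m = taylor_coeff (gv f) m"

definition Rr :: "nat \<Rightarrow> (complex \<Rightarrow> complex) \<Rightarrow> complex \<Rightarrow> complex" where
  "Rr K f v = gv f v - (\<Sum>m<K. bco f m * v^m)"

lemma half_ball: assumes "cmod v < 1/2"
  shows "1 + v \<noteq> 0" "cmod (v / (1 + v)) < 1" "cmod (v / (1 + v)) \<le> cmod v / (1 - cmod v)"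
proof -
  have "cmod (1 + v) \<ge> 1 - cmod v" using norm_triangle_ineq2[of 1 "-v"] by (simp add: norm_minus_commute)
  then have c: "cmod (1 + v) > 1/2" "cmod (1 + v) \<ge> 1 - cmod v" using assms by auto
  then show "1 + v \<noteq> 0" by auto
  show "cmod (v / (1 + v)) < 1" using c assms by (simp add: norm_divide divide_less_eq)
  show "cmod (v / (1 + v)) \<le> cmod v / (1 - cmod v)"
    using c assms by (simp add: norm_divide frac_le)
qed

lemma gv_holo: assumes "f holomorphic_on ball 0 1"
  shows "gv f holomorphic_on ball 0 (1/2)"
proof -
  have "(\<lambda>v. v / (1 + v)) holomorphic_on ball 0 (1/2)"
    using half_ball(1) by (intro holomorphic_intros) auto
  moreover have "(\<lambda>v::complex. v / (1 + v)) ` ball 0 (1/2) \<subseteq> ball 0 1"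
  proof
    fix u assume "u \<in> (\<lambda>v::complex. v / (1 + v)) ` ball 0 (1/2)"
    then obtain v where v: "v \<in> ball 0 (1/2)" "u = v / (1 + v)" by auto
    then show "u \<in> ball 0 1" using half_ball(2)[of v] by simp
  qed
  ultimately have "(f \<circ> (\<lambda>v. v / (1 + v))) holomorphic_on ball 0 (1/2)"
    by (rule holomorphic_on_compose_gen[OF _ assms])
  then show ?thesis by (simp add: gv_def[abs_def] o_def)
qed

lemma bco_lin: assumes "F holomorphic_on ball 0 1" "G holomorphic_on ball 0 1"
  shows "bco (\<lambda>z. F z - a * G z) m = bco F m - a * bco G m"
proof -
  have "gv (\<lambda>z. F z - a * G z) = (\<lambda>v. gv F v - a * gv G v)" by (simp add: gv_def fun_eq_iff)
  then show ?thesis unfolding bco_def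
    using taylor_coeff_lin[OF gv_holo[OF assms(1)] gv_holo[OF assms(2)]] by simp
qed

lemma Rr_lin: assumes "F holomorphic_on ball 0 1" "G holomorphic_on ball 0 1"
  shows "Rr K (\<lambda>z. F z - a * G z) v = Rr K F v - a * Rr K G v"
  unfolding Rr_def bco_lin[OF assms]
  by (simp add: gv_def algebra_simps sum_subtractf sum_distrib_left)

lemma Rr_comp: assumes "0 < t" "t < 1" "f holomorphic_on ball 0 1" "x \<ge> 0"
  shows "Rr K (f \<circ> psi (of_real t)) (of_real x) = Rr K f (of_real (t * x))"
proof -
  have gvc: "gv (f \<circ> psi (of_real t)) v = gv f (of_real t * v)"
    if "1 + v \<noteq> 0" "1 + of_real t * v \<noteq> 0" for v
  proof -
    have d: "1 - (1 - of_real t) * (v / (1 + v)) = (1 + of_real t * v) / (1 + v)"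
      using that by (simp add: field_simps)
    have "psi (of_real t) (v / (1 + v)) = (of_real t * (v / (1 + v))) / ((1 + of_real t * v) / (1 + v))"
      unfolding psi_def d ..
    also have "\<dots> = of_real t * v / (1 + of_real t * v)"
    proof -
      have B: "(1 + of_real t * v) / (1 + v) \<noteq> 0" using that by simp
      show ?thesis unfolding frac_eq_eq[OF B that(2)] by (simp add: mult_ac)
    qed
    finally have "psi (of_real t) (v / (1 + v)) = of_real t * v / (1 + of_real t * v)" .
    then show ?thesis by (simp add: gv_def)
  qed
  have bc: "bco (f \<circ> psi (of_real t)) m = of_real t ^ m * bco f m" for m
  proof -
    have ev: "eventually (\<lambda>v. gv (f \<circ> psi (of_real t)) v = gv f (of_real t * v)) (nhds 0)"
    proof -
      have "eventually (\<lambda>v. v \<in> ball (0::complex) (1/2)) (nhds 0)"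
        by (intro eventually_nhds_in_open) auto
      then show ?thesis
      proof (rule eventually_mono)
        fix v :: complex assume v: "v \<in> ball 0 (1/2)"
        have tv: "cmod (of_real t * v) < 1/2" using v assms by (simp add: norm_mult) (smt (verit) mult_left_le_one_le norm_ge_zero)
        show "gv (f \<circ> psi (of_real t)) v = gv f (of_real t * v)"
          using half_ball(1)[of v] half_ball(1)[OF tv] v by (intro gvc) auto
      qed
    qed
    have "(deriv ^^ m) (gv (f \<circ> psi (of_real t))) 0 = (deriv ^^ m) (\<lambda>v. gv f (of_real t * v)) 0"
      by (rule higher_deriv_cong_ev[OF ev refl])
    also have "\<dots> = of_real t ^ m * (deriv ^^ m) (gv f) (of_real t * 0)"
    proof (rule higher_deriv_compose_linear[OF gv_holo[OF assms(3)]])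
      fix w :: complex assume "w \<in> ball 0 (1/2)"
      then show "of_real t * w \<in> ball 0 (1/2)" using assms
        by (simp add: norm_mult) (smt (verit) mult_left_le_one_le norm_ge_zero)
    qed auto
    finally show ?thesis by (simp add: bco_def taylor_coeff_def)
  qed
  have "gv (f \<circ> psi (of_real t)) (of_real x) = gv f (of_real t * of_real x)"
  proof (rule gvc)
    have tx: "t * x \<ge> 0" using assms by simp
    show "1 + complex_of_real x \<noteq> 0" using assms by (auto simp: complex_eq_iff)
    show "1 + of_real t * complex_of_real x \<noteq> 0"
    proof
      assume "1 + of_real t * complex_of_real x = 0"
      then have "1 + t * x = 0" by (simp add: complex_eq_iff)
      with tx show False by linarith
    qed
  qed
  then show ?thesis unfolding Rr_def bc
    by (simp add: power_mult_distrib mult_ac)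
qed



definition C0 :: "real \<Rightarrow> real" where "C0 \<beta> = sqrt ((8/9) powr (-(2+\<beta>)))"

lemma C0_nonneg: "C0 \<beta> \<ge> 0" by (simp add: C0_def)

lemma sup_bound: assumes "\<beta> > -1" "h \<in> A2 \<beta>" "cmod v \<le> 1/4"
  shows "cmod (gv h v) \<le> A2_norm \<beta> h * C0 \<beta>"
proof -
  define z where "z = v / (1 + v)"
  have v2: "cmod v < 1/2" using assms by simp
  have zle: "cmod z \<le> cmod v / (1 - cmod v)" using half_ball(3)[OF v2] by (simp add: z_def)
  also have "\<dots> \<le> (1/4) / (1 - 1/4)" using assms(3) by (intro frac_le) auto
  finally have z3: "cmod z \<le> 1/3" by simp
  have z1: "cmod z < 1" using z3 by simp
  have "(cmod z)^2 \<le> (1/3)^2" using z3 by (intro power_mono) auto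
  then have zz: "8/9 \<le> 1 - (cmod z)^2" by (simp add: power2_eq_square)
  have "(1 - (cmod z)^2) powr (-(2+\<beta>)) \<le> (8/9) powr (-(2+\<beta>))"
    using assms(1) zz by (intro powr_mono2') auto
  then have sq: "sqrt ((1 - (cmod z)^2) powr (-(2+\<beta>))) \<le> C0 \<beta>" unfolding C0_def by (rule real_sqrt_le_mono)
  have "A2_norm \<beta> h * sqrt ((1 - (cmod z)^2) powr (-(2+\<beta>))) \<le> A2_norm \<beta> h * C0 \<beta>"
    by (rule mult_left_mono[OF sq A2_norm_nonneg[OF assms(1,2)]])
  moreover have "cmod (h z) \<le> A2_norm \<beta> h * sqrt ((1 - (cmod z)^2) powr (-(2+\<beta>)))"
    by (rule pointwise_bound[OF assms(1,2) z1])
  ultimately show ?thesis by (simp add: gv_def z_def)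
qed

lemma bco_bound: assumes "\<beta> > -1" "h \<in> A2 \<beta>"
  shows "cmod (bco h m) \<le> A2_norm \<beta> h * C0 \<beta> * 4^m"
proof -
  have hol: "gv h holomorphic_on ball 0 (1/2)" using assms by (intro gv_holo) (simp add: A2_def)
  have "norm ((deriv ^^ m) (gv h) 0) \<le> fact m * (A2_norm \<beta> h * C0 \<beta>) / (1/4)^m"
  proof (rule Cauchy_inequality)
    show "gv h holomorphic_on ball 0 (1/4)" by (rule holomorphic_on_subset[OF hol]) auto
    show "continuous_on (cball 0 (1/4)) (gv h)"
      by (rule holomorphic_on_imp_continuous_on[OF holomorphic_on_subset[OF hol]]) auto
    fix x :: complex assume "cmod (0 - x) = 1/4"
    then show "cmod (gv h x) \<le> A2_norm \<beta> h * C0 \<beta>" by (intro sup_bound[OF assms]) simp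
  qed simp
  then show ?thesis by (simp add: bco_def taylor_coeff_def norm_divide field_simps power_divide)
qed

lemma R_small: assumes "\<beta> > -1" "h \<in> A2 \<beta>" "0 \<le> x" "x \<le> 1/8"
  shows "cmod (Rr K h (of_real x)) \<le> 2 * A2_norm \<beta> h * C0 \<beta> * (4*x)^K"
proof -
  define B where "B = A2_norm \<beta> h * C0 \<beta>"
  have B0: "B \<ge> 0" using A2_norm_nonneg[OF assms(1,2)] C0_nonneg by (simp add: B_def)
  have hol: "gv h holomorphic_on ball 0 (1/2)" using assms by (intro gv_holo) (simp add: A2_def)
  define f where "f = (\<lambda>m. bco h m * (of_real x)^m)"
  have "f sums gv h (of_real x)"
    using holomorphic_power_series[OF hol, of "of_real x"] assms
    by (simp add: f_def bco_def taylor_coeff_def)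
  then have "(\<lambda>i. f (i + K)) sums (gv h (of_real x) - (\<Sum>i<K. f i))"
    by (simp add: sums_iff_shift)
  then have R: "Rr K h (of_real x) = (\<Sum>i. f (i + K))"
    by (simp add: sums_iff Rr_def f_def)
  have q: "0 \<le> 4*x" "4*x < 1" using assms by auto
  have nb: "norm (f (i + K)) \<le> B * (4*x)^K * (4*x)^i" for i
  proof -
    have "norm (f (i + K)) = cmod (bco h (i+K)) * x^(i+K)"
      using assms by (simp add: f_def norm_mult norm_power)
    also have "\<dots> \<le> B * 4^(i+K) * x^(i+K)"
      using bco_bound[OF assms(1,2), of "i+K"] assms by (intro mult_right_mono) (auto simp: B_def)
    also have "\<dots> = B * (4*x)^K * (4*x)^i" by (simp add: power_add power_mult_distrib mult_ac)
    finally show ?thesis .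
  qed
  have sg: "summable (\<lambda>i. B * (4*x)^K * (4*x)^i)"
    using q by (intro summable_mult summable_geometric) auto
  have "cmod (Rr K h (of_real x)) \<le> (\<Sum>i. B * (4*x)^K * (4*x)^i)"
    unfolding R by (rule norm_suminf_le[OF nb sg])
  also have "\<dots> = B * (4*x)^K * (1 / (1 - 4*x))"
  proof -
    have gs: "(\<lambda>i. (4*x)^i) sums (1 / (1 - 4*x))" using q by (intro geometric_sums) simp
    have "(\<lambda>i. B * (4*x)^K * (4*x)^i) sums (B * (4*x)^K * (1 / (1 - 4*x)))"
      by (rule sums_mult[OF gs])
    then show ?thesis by (simp add: sums_iff)
  qed
  also have "\<dots> \<le> B * (4*x)^K * 2"
    using q assms B0 by (intro mult_left_mono) (auto simp: field_simps)
  finally show ?thesis by (simp add: B_def mult_ac)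
qed

lemma R_large: assumes "\<beta> > -1" "h \<in> A2 \<beta>" "0 \<le> x" "2 + \<beta> \<le> 2 * (real K - 1)" "K \<ge> 1"
  shows "cmod (Rr K h (of_real x)) \<le> A2_norm \<beta> h * (1+x)^(K-1) + A2_norm \<beta> h * C0 \<beta> * (\<Sum>m<K. 4^m * x^m)"
proof -
  define N where "N = A2_norm \<beta> h"
  have N0: "N \<ge> 0" using A2_norm_nonneg[OF assms(1,2)] by (simp add: N_def)
  define z where "z = x / (1 + x)"
  have z0: "0 \<le> z" "z < 1" using assms by (auto simp: z_def)
  have zc: "of_real x / (1 + of_real x) = (of_real z :: complex)" by (simp add: z_def)
  have g1: "cmod (gv h (of_real x)) \<le> N * sqrt ((1 - z^2) powr (-(2+\<beta>)))"
    using pointwise_bound[OF assms(1,2), of "of_real z"] z0 by (simp add: gv_def zc N_def)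
  have x1: "1 + x > 0" using assms by simp
  have e1: "1 / (1 + x) = 1 - z" using x1 by (simp add: z_def field_simps)
  have "z * z \<le> z * 1" using z0 by (intro mult_left_mono) auto
  then have zz: "1 / (1 + x) \<le> 1 - z^2" unfolding e1 by (simp add: power2_eq_square)
  have "(1 - z^2) powr (-(2+\<beta>)) \<le> (1 / (1 + x)) powr (-(2+\<beta>))"
    using zz assms by (intro powr_mono2') auto
  also have "\<dots> = (1 + x) powr (2+\<beta>)"
  proof -
    have "(1 / (1 + x)) powr (-(2+\<beta>)) = 1 / ((1/(1+x)) powr (2+\<beta>))" by (rule powr_minus_divide)
    also have "(1/(1+x)) powr (2+\<beta>) = 1 / (1+x) powr (2+\<beta>)" using x1 by (simp add: powr_divide)
    finally show ?thesis by simp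
  qed
  finally have "sqrt ((1 - z^2) powr (-(2+\<beta>))) \<le> sqrt ((1 + x) powr (2+\<beta>))" by (rule real_sqrt_le_mono)
  also have "\<dots> = (1 + x) powr ((2+\<beta>)/2)" using assms by (simp add: powr_half_sqrt_powr)
  also have "\<dots> \<le> (1 + x) powr (real (K-1))" using assms by (intro powr_mono) auto
  also have "\<dots> = (1 + x)^(K-1)" using assms by (intro powr_realpow) auto
  finally have g2: "cmod (gv h (of_real x)) \<le> N * (1 + x)^(K-1)"
    using g1 N0 by (meson mult_left_mono order_trans)
  have p: "cmod (\<Sum>m<K. bco h m * (of_real x)^m) \<le> N * C0 \<beta> * (\<Sum>m<K. 4^m * x^m)"
  proof -
    have "cmod (\<Sum>m<K. bco h m * (of_real x)^m) \<le> (\<Sum>m<K. cmod (bco h m) * x^m)"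
      using assms by (intro order_trans[OF norm_sum]) (simp add: norm_mult norm_power)
    also have "\<dots> \<le> (\<Sum>m<K. N * C0 \<beta> * 4^m * x^m)"
      using bco_bound[OF assms(1,2)] assms by (intro sum_mono mult_right_mono) (auto simp: N_def)
    finally show ?thesis by (simp add: sum_distrib_left mult_ac)
  qed
  have "cmod (Rr K h (of_real x)) \<le> cmod (gv h (of_real x)) + cmod (\<Sum>m<K. bco h m * (of_real x)^m)"
    unfolding Rr_def by (rule norm_triangle_ineq4)
  with g2 p show ?thesis by (simp add: N_def)
qed



definition Dc :: "real \<Rightarrow> nat \<Rightarrow> real" where "Dc \<beta> K = 2^(K-1) + C0 \<beta> * K * 4^K"
definition Ec :: "real \<Rightarrow> nat \<Rightarrow> real" where "Ec \<beta> K = Dc \<beta> K * 8^K"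

lemma Ec_pos: "Ec \<beta> K > 0"
proof -
  have "Dc \<beta> K > 0" unfolding Dc_def using C0_nonneg[of \<beta>] by (intro add_pos_nonneg) auto
  then show ?thesis by (simp add: Ec_def)
qed

lemma poly_le1: assumes "0 \<le> x" "x \<le> 1" shows "(\<Sum>m<K. 4^m * x^m) \<le> real K * 4^K"
proof -
  have "(\<Sum>m<K. 4^m * x^m) \<le> (\<Sum>m<K. (4::real)^K)"
  proof (intro sum_mono)
    fix m assume "m \<in> {..<K}"
    have "4^m * x^m \<le> (4::real)^m * 1" using assms by (intro mult_left_mono power_le_one) auto
    also have "\<dots> \<le> 4^K"
    proof -
      have "(4::real)^m \<le> 4^K" using \<open>m \<in> {..<K}\<close> by (intro power_increasing) auto
      then show ?thesis by simp
    qed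
    finally show "4^m * x^m \<le> (4::real)^K" .
  qed
  then show ?thesis by simp
qed

lemma poly_ge1: assumes "1 \<le> x" shows "(\<Sum>m<K. 4^m * x^m) \<le> real K * 4^K * x^(K-1)"
proof -
  have "(\<Sum>m<K. 4^m * x^m) \<le> (\<Sum>m<K. (4::real)^K * x^(K-1))"
  proof (intro sum_mono)
    fix m assume m: "m \<in> {..<K}"
    have "4^m * x^m \<le> (4::real)^K * x^m" using assms m by (intro mult_right_mono power_increasing) auto
    also have "\<dots> \<le> 4^K * x^(K-1)" using assms m by (intro mult_left_mono power_increasing) auto
    finally show "4^m * x^m \<le> (4::real)^K * x^(K-1)" .
  qed
  then show ?thesis by simp
qed

lemma R_bound: assumes "\<beta> > -1" "h \<in> A2 \<beta>" "0 \<le> x" "2 + \<beta> \<le> 2 * (real K - 1)" "K \<ge> 1"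
  shows "x \<le> 1 \<Longrightarrow> cmod (Rr K h (of_real x)) \<le> Ec \<beta> K * A2_norm \<beta> h * x^K"
    and "1 \<le> x \<Longrightarrow> cmod (Rr K h (of_real x)) \<le> Ec \<beta> K * A2_norm \<beta> h * x^(K-1)"
proof -
  define N where "N = A2_norm \<beta> h"
  have N0: "N \<ge> 0" using A2_norm_nonneg[OF assms(1,2)] by (simp add: N_def)
  have C0: "C0 \<beta> \<ge> 0" by (rule C0_nonneg)
  have D0: "Dc \<beta> K \<ge> 0" using C0 by (simp add: Dc_def)
  have RL: "cmod (Rr K h (of_real x)) \<le> N * (1+x)^(K-1) + N * C0 \<beta> * (\<Sum>m<K. 4^m * x^m)"
    using R_large[OF assms] by (simp add: N_def)
  {
    assume x1: "x \<le> 1"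
    show "cmod (Rr K h (of_real x)) \<le> Ec \<beta> K * A2_norm \<beta> h * x^K"
    proof (cases "x \<le> 1/8")
      case True
      have "cmod (Rr K h (of_real x)) \<le> 2 * N * C0 \<beta> * (4*x)^K"
        using R_small[OF assms(1,2,3) True] by (simp add: N_def)
      also have "\<dots> = (2 * C0 \<beta> * 4^K) * N * x^K" by (simp add: power_mult_distrib)
      also have "\<dots> \<le> Ec \<beta> K * N * x^K"
      proof (intro mult_right_mono)
        have "(8::real)^1 \<le> 8^K" by (rule power_increasing) (use assms(5) in auto)
        then have "(2::real) \<le> 8^K" by simp
        then have "2 * C0 \<beta> * 4^K \<le> 8^K * C0 \<beta> * 4^K" using C0 by (intro mult_right_mono) auto
        also have "\<dots> \<le> 8^K * (C0 \<beta> * K * 4^K)"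
        proof -
          have "1 * (C0 \<beta> * (4^K * 8^K)) \<le> real K * (C0 \<beta> * (4^K * 8^K))"
            using C0 assms(5) by (intro mult_right_mono) auto
          then show ?thesis by (simp add: mult_ac)
        qed
        also have "\<dots> \<le> Ec \<beta> K" by (simp add: Ec_def Dc_def algebra_simps)
        finally show "2 * C0 \<beta> * 4^K \<le> Ec \<beta> K" .
      qed (use N0 assms in auto)
      finally show ?thesis by (simp add: N_def)
    next
      case False
      have "(1+x)^(K-1) \<le> (2::real)^(K-1)" using assms x1 by (intro power_mono) auto
      then have "cmod (Rr K h (of_real x)) \<le> N * 2^(K-1) + N * C0 \<beta> * (real K * 4^K)"
        using RL poly_le1[OF assms(3) x1, of K] N0 C0
        by (smt (verit, best) mult_left_mono mult_nonneg_nonneg)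
      also have "\<dots> = Dc \<beta> K * N" by (simp add: Dc_def algebra_simps)
      also have "\<dots> \<le> Dc \<beta> K * N * (8*x)^K"
      proof -
        have "1 \<le> (8*x)^K" using False by (intro one_le_power) auto
        then have "Dc \<beta> K * N * 1 \<le> Dc \<beta> K * N * (8*x)^K"
          using D0 N0 by (intro mult_left_mono) auto
        then show ?thesis by simp
      qed
      also have "\<dots> = Ec \<beta> K * N * x^K" by (simp add: Ec_def power_mult_distrib)
      finally show ?thesis by (simp add: N_def)
    qed
  }
  {
    assume x1: "1 \<le> x"
    have a: "(1+x)^(K-1) \<le> (2*x)^(K-1)" using x1 by (intro power_mono) auto
    have "cmod (Rr K h (of_real x)) \<le> N * (2*x)^(K-1) + N * C0 \<beta> * (real K * 4^K * x^(K-1))"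
      using RL poly_ge1[OF x1, of K] N0 C0 a
      by (smt (verit, best) mult_left_mono mult_nonneg_nonneg)
    also have "\<dots> = Dc \<beta> K * N * x^(K-1)" by (simp add: Dc_def algebra_simps power_mult_distrib)
    also have "\<dots> \<le> Ec \<beta> K * N * x^(K-1)"
    proof -
      have "Dc \<beta> K * 1 \<le> Dc \<beta> K * 8^K" using D0 by (intro mult_left_mono) auto
      then show ?thesis using N0 x1 unfolding Ec_def by (intro mult_right_mono) auto
    qed
    finally show "cmod (Rr K h (of_real x)) \<le> Ec \<beta> K * A2_norm \<beta> h * x^(K-1)" by (simp add: N_def)
  }
qed



definition Lam :: "nat \<Rightarrow> real \<Rightarrow> real \<Rightarrow> real \<Rightarrow> (complex \<Rightarrow> complex) \<Rightarrow> complex" where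
  "Lam K c s \<tau> f = (\<Sum>n. complex_of_real (c^n) * Rr K f (of_real (\<tau> * s^n)))
      + (\<Sum>m. complex_of_real ((1/c)^Suc m) * Rr K f (of_real (\<tau> / s^Suc m)))"

lemma c_facts: assumes "0 < s" "s < 1" "c = sqrt s / s^K" "K \<ge> 1"
  shows "c > 0" "c * s^K = sqrt s" "(1/c) * (1/s)^(K-1) = sqrt s"
proof -
  show "c > 0" using assms by simp
  show "c * s^K = sqrt s" using assms by simp
  have sk: "s^K = s * s^(K-1)" using assms(4) by (metis Suc_diff_le diff_Suc_1 power_Suc)
  have "(1/c) * (1/s)^(K-1) = s^K / (sqrt s * s^(K-1))" using assms by (simp add: power_divide)
  also have "\<dots> = s / sqrt s" using assms sk by simp
  also have "\<dots> = sqrt s" using assms by (metis real_div_sqrt less_imp_le)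
  finally show "(1/c) * (1/s)^(K-1) = sqrt s" .
qed

locale cfg =
  fixes \<beta> :: real and K :: nat and s :: real and c :: real
  assumes beta: "\<beta> > -1" and K1: "K \<ge> 1" and KB: "2 + \<beta> \<le> 2 * (real K - 1)"
    and s0: "0 < s" and s1: "s < 1" and cdef: "c = sqrt s / s^K"
begin

lemma cpos: "c > 0" using c_facts[OF s0 s1 cdef K1] by simp
lemma cs: "c * s^K = sqrt s" using c_facts[OF s0 s1 cdef K1] by simp
lemma cs2: "(1/c) * (1/s)^(K-1) = sqrt s" using c_facts[OF s0 s1 cdef K1] by simp
lemma r0: "0 < sqrt s" "sqrt s < 1" using s0 s1 by auto

lemma t1: assumes "h \<in> A2 \<beta>" "0 \<le> \<tau>" "\<tau> \<le> 1"
  shows "norm (complex_of_real (c^n) * Rr K h (of_real (\<tau> * s^n))) \<le> Ec \<beta> K * A2_norm \<beta> h * (sqrt s)^n"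
proof -
  define x where "x = \<tau> * s^n"
  have sn: "0 \<le> s^n" "s^n \<le> 1" using s0 s1 by (auto simp: power_le_one)
  have x3: "x \<le> s^n" unfolding x_def using assms sn by (intro mult_left_le_one_le) auto
  have x0: "0 \<le> x" "x \<le> 1" "x \<le> s^n" using assms sn x3 by (auto simp: x_def)
  have N0: "A2_norm \<beta> h \<ge> 0" by (rule A2_norm_nonneg[OF beta assms(1)])
  have "norm (complex_of_real (c^n) * Rr K h (of_real x)) = c^n * cmod (Rr K h (of_real x))"
    unfolding norm_mult norm_of_real using cpos by simp
  also have "\<dots> \<le> c^n * (Ec \<beta> K * A2_norm \<beta> h * x^K)"
    using R_bound(1)[OF beta assms(1) x0(1) KB K1 x0(2)] cpos by (intro mult_left_mono) auto
  also have "\<dots> \<le> c^n * (Ec \<beta> K * A2_norm \<beta> h * (s^n)^K)"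
    using x0 N0 Ec_pos[of \<beta> K] cpos by (intro mult_left_mono power_mono) auto
  also have "\<dots> = Ec \<beta> K * A2_norm \<beta> h * (c * s^K)^n"
    by (simp add: power_mult_distrib power_mult[symmetric] mult.commute mult.left_commute)
  finally show ?thesis by (simp add: x_def cs)
qed

lemma t2: assumes "h \<in> A2 \<beta>" "s \<le> \<tau>" "\<tau> \<le> 1"
  shows "norm (complex_of_real ((1/c)^Suc m) * Rr K h (of_real (\<tau> / s^Suc m))) \<le> Ec \<beta> K * A2_norm \<beta> h * (sqrt s)^Suc m"
proof -
  define x where "x = \<tau> / s^Suc m"
  have sp: "s^Suc m \<le> s" "s^Suc m > 0"
  proof -
    have "s * s^m \<le> s * 1" using s0 s1 by (intro mult_left_mono power_le_one) auto
    then show "s^Suc m \<le> s" by simp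
  qed (use s0 in simp)
  have st: "s^Suc m \<le> \<tau>" using sp(1) assms(2) by linarith
  have x1: "1 \<le> x" unfolding x_def using st sp(2) by (simp add: le_divide_eq del: power_Suc)
  have x2: "x \<le> 1 / s^Suc m" unfolding x_def using assms sp by (intro divide_right_mono) auto
  have x0: "0 \<le> x" "1 \<le> x" "x \<le> 1 / s^Suc m" using x1 x2 by auto
  have N0: "A2_norm \<beta> h \<ge> 0" by (rule A2_norm_nonneg[OF beta assms(1)])
  have "norm (complex_of_real ((1/c)^Suc m) * Rr K h (of_real x)) = (1/c)^Suc m * cmod (Rr K h (of_real x))"
    unfolding norm_mult norm_of_real using cpos by (simp del: power_Suc)
  also have "\<dots> \<le> (1/c)^Suc m * (Ec \<beta> K * A2_norm \<beta> h * x^(K-1))"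
    using R_bound(2)[OF beta assms(1) x0(1) KB K1 x0(2)] cpos by (intro mult_left_mono) auto
  also have "\<dots> \<le> (1/c)^Suc m * (Ec \<beta> K * A2_norm \<beta> h * (1 / s^Suc m)^(K-1))"
    using x0 N0 Ec_pos[of \<beta> K] cpos by (intro mult_left_mono power_mono) auto
  also have "\<dots> = Ec \<beta> K * A2_norm \<beta> h * ((1/c) * (1/s)^(K-1))^Suc m"
    by (simp add: power_mult_distrib power_divide power_mult[symmetric] mult.commute mult.left_commute)
  finally have "norm (complex_of_real ((1/c)^Suc m) * Rr K h (of_real x)) \<le> Ec \<beta> K * A2_norm \<beta> h * ((1/c) * (1/s)^(K-1))^Suc m" .
  then show ?thesis unfolding cs2 by (simp only: x_def)
qed

lemma sum1: assumes "h \<in> A2 \<beta>" "0 \<le> \<tau>" "\<tau> \<le> 1"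
  shows "summable (\<lambda>n. norm (complex_of_real (c^n) * Rr K h (of_real (\<tau> * s^n))))"
proof (rule summable_comparison_test'[where N=0])
  show "summable (\<lambda>n. Ec \<beta> K * A2_norm \<beta> h * sqrt s ^ n)"
    using r0 by (auto intro!: summable_mult summable_geometric)
  fix n show "norm (norm (complex_of_real (c^n) * Rr K h (of_real (\<tau> * s^n)))) \<le> Ec \<beta> K * A2_norm \<beta> h * sqrt s ^ n"
    using t1[OF assms, of n] by simp
qed

lemma sum2: assumes "h \<in> A2 \<beta>" "s \<le> \<tau>" "\<tau> \<le> 1"
  shows "summable (\<lambda>m. norm (complex_of_real ((1/c)^Suc m) * Rr K h (of_real (\<tau> / s^Suc m))))"
proof (rule summable_comparison_test'[where N=0])
  show "summable (\<lambda>m. Ec \<beta> K * A2_norm \<beta> h * sqrt s ^ Suc m)"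
    using r0 by (auto intro!: summable_mult summable_geometric simp: power_Suc)
  fix m show "norm (norm (complex_of_real ((1/c)^Suc m) * Rr K h (of_real (\<tau> / s^Suc m)))) \<le> Ec \<beta> K * A2_norm \<beta> h * sqrt s ^ Suc m"
    using t2[OF assms, of m] by simp
qed

definition Mb where "Mb = 2 * Ec \<beta> K / (1 - sqrt s)"

lemma Mb_pos: "Mb > 0" using Ec_pos[of \<beta> K] r0 by (simp add: Mb_def)

lemma Lam_bound: assumes "h \<in> A2 \<beta>" "s \<le> \<tau>" "\<tau> \<le> 1"
  shows "cmod (Lam K c s \<tau> h) \<le> Mb * A2_norm \<beta> h"
proof -
  have t0: "0 \<le> \<tau>" using assms s0 by simp
  let ?E = "Ec \<beta> K * A2_norm \<beta> h"
  have g1: "(\<lambda>n. ?E * sqrt s ^ n) sums (?E * (1 / (1 - sqrt s)))"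
    using r0 by (intro sums_mult geometric_sums) auto
  have g2: "(\<lambda>m. ?E * sqrt s ^ Suc m) sums (?E * (sqrt s / (1 - sqrt s)))"
  proof -
    have "(\<lambda>m. sqrt s * sqrt s ^ m) sums (sqrt s * (1 / (1 - sqrt s)))"
      using r0 by (intro sums_mult geometric_sums) auto
    then have "(\<lambda>m. ?E * (sqrt s * sqrt s ^ m)) sums (?E * (sqrt s * (1 / (1 - sqrt s))))"
      by (rule sums_mult)
    then show ?thesis by (simp add: power_Suc)
  qed
  have "cmod (\<Sum>n. complex_of_real (c^n) * Rr K h (of_real (\<tau> * s^n))) \<le> ?E * (1 / (1 - sqrt s))"
    using norm_suminf_le[OF t1[OF assms(1) t0 assms(3)] sums_summable[OF g1]] g1
    by (simp add: sums_iff)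
  moreover have "cmod (\<Sum>m. complex_of_real ((1/c)^Suc m) * Rr K h (of_real (\<tau> / s^Suc m))) \<le> ?E * (sqrt s / (1 - sqrt s))"
    using norm_suminf_le[OF t2[OF assms] sums_summable[OF g2]] g2
    by (simp add: sums_iff)
  moreover have "?E * (sqrt s / (1 - sqrt s)) \<le> ?E * (1 / (1 - sqrt s))"
    using r0 A2_norm_nonneg[OF beta assms(1)] Ec_pos[of \<beta> K]
    by (intro mult_left_mono divide_right_mono) auto
  ultimately have "cmod (Lam K c s \<tau> h) \<le> 2 * (?E * (1 / (1 - sqrt s)))"
    unfolding Lam_def by (smt (verit) norm_triangle_ineq)
  then show ?thesis by (simp add: Mb_def)
qed

end



context cfg
begin

lemma summ1: assumes "h \<in> A2 \<beta>" "s \<le> \<tau>" "\<tau> \<le> 1"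
  shows "summable (\<lambda>n. complex_of_real (c^n) * Rr K h (of_real (\<tau> * s^n)))"
proof -
  have "0 \<le> \<tau>" using assms s0 by simp
  then show ?thesis by (rule summable_norm_cancel[OF sum1[OF assms(1) _ assms(3)]])
qed

lemma summ2: assumes "h \<in> A2 \<beta>" "s \<le> \<tau>" "\<tau> \<le> 1"
  shows "summable (\<lambda>m. complex_of_real ((1/c)^Suc m) * Rr K h (of_real (\<tau> / s^Suc m)))"
  by (rule summable_norm_cancel[OF sum2[OF assms]])

lemma Lam_lin: assumes "F \<in> A2 \<beta>" "G \<in> A2 \<beta>" "s \<le> \<tau>" "\<tau> \<le> 1"
  shows "Lam K c s \<tau> (\<lambda>z. F z - a * G z) = Lam K c s \<tau> F - a * Lam K c s \<tau> G"
proof -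
  have hF: "F holomorphic_on ball 0 1" and hG: "G holomorphic_on ball 0 1" using assms by (auto simp: A2_def)
  note RL = Rr_lin[OF hF hG]
  have e1: "(\<Sum>n. complex_of_real (c^n) * Rr K (\<lambda>z. F z - a * G z) (of_real (\<tau> * s^n)))
     = (\<Sum>n. complex_of_real (c^n) * Rr K F (of_real (\<tau> * s^n))) - a * (\<Sum>n. complex_of_real (c^n) * Rr K G (of_real (\<tau> * s^n)))"
  proof -
    have "(\<Sum>n. complex_of_real (c^n) * Rr K (\<lambda>z. F z - a * G z) (of_real (\<tau> * s^n)))
      = (\<Sum>n. complex_of_real (c^n) * Rr K F (of_real (\<tau> * s^n)) - a * (complex_of_real (c^n) * Rr K G (of_real (\<tau> * s^n))))"
      by (simp add: RL algebra_simps)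
    also have "\<dots> = (\<Sum>n. complex_of_real (c^n) * Rr K F (of_real (\<tau> * s^n))) - (\<Sum>n. a * (complex_of_real (c^n) * Rr K G (of_real (\<tau> * s^n))))"
      using summ1[OF assms(1,3,4)] summable_mult[OF summ1[OF assms(2,3,4)], of a] by (rule suminf_diff[symmetric])
    also have "(\<Sum>n. a * (complex_of_real (c^n) * Rr K G (of_real (\<tau> * s^n)))) = a * (\<Sum>n. complex_of_real (c^n) * Rr K G (of_real (\<tau> * s^n)))"
      by (rule suminf_mult[OF summ1[OF assms(2,3,4)]])
    finally show ?thesis .
  qed
  have e2: "(\<Sum>m. complex_of_real ((1/c)^Suc m) * Rr K (\<lambda>z. F z - a * G z) (of_real (\<tau> / s^Suc m)))
     = (\<Sum>m. complex_of_real ((1/c)^Suc m) * Rr K F (of_real (\<tau> / s^Suc m))) - a * (\<Sum>m. complex_of_real ((1/c)^Suc m) * Rr K G (of_real (\<tau> / s^Suc m)))"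
  proof -
    have "(\<Sum>m. complex_of_real ((1/c)^Suc m) * Rr K (\<lambda>z. F z - a * G z) (of_real (\<tau> / s^Suc m)))
      = (\<Sum>m. complex_of_real ((1/c)^Suc m) * Rr K F (of_real (\<tau> / s^Suc m)) - a * (complex_of_real ((1/c)^Suc m) * Rr K G (of_real (\<tau> / s^Suc m))))"
      by (simp add: RL algebra_simps del: power_Suc)
    also have "\<dots> = (\<Sum>m. complex_of_real ((1/c)^Suc m) * Rr K F (of_real (\<tau> / s^Suc m))) - (\<Sum>m. a * (complex_of_real ((1/c)^Suc m) * Rr K G (of_real (\<tau> / s^Suc m))))"
      using summ2[OF assms(1,3,4)] summable_mult[OF summ2[OF assms(2,3,4)], of a] by (rule suminf_diff[symmetric])
    also have "(\<Sum>m. a * (complex_of_real ((1/c)^Suc m) * Rr K G (of_real (\<tau> / s^Suc m)))) = a * (\<Sum>m. complex_of_real ((1/c)^Suc m) * Rr K G (of_real (\<tau> / s^Suc m)))"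
      by (rule suminf_mult[OF summ2[OF assms(2,3,4)]])
    finally show ?thesis .
  qed
  have gen: "\<And>A B C D::complex. (A - a*B) + (C - a*D) = (A + C) - a*(B+D)" by (simp add: algebra_simps)
  show ?thesis unfolding Lam_def e1 e2 by (rule gen)
qed

lemma Lam_comp: assumes "f holomorphic_on ball 0 1" "0 < t" "t < 1" "0 \<le> \<tau>"
  shows "Lam K c s \<tau> (f \<circ> psi (of_real t)) = Lam K c s (t * \<tau>) f"
proof -
  have a: "Rr K (f \<circ> psi (of_real t)) (of_real (\<tau> * s^n)) = Rr K f (of_real ((t * \<tau>) * s^n))" for n
    using Rr_comp[OF assms(2,3,1), of "\<tau> * s^n" K] assms s0 by (simp add: mult.assoc)
  have b: "Rr K (f \<circ> psi (of_real t)) (of_real (\<tau> / s^Suc m)) = Rr K f (of_real ((t * \<tau>) / s^Suc m))" for m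
    using Rr_comp[OF assms(2,3,1), of "\<tau> / s^Suc m" K] assms s0 by (simp add: del: power_Suc)
  show ?thesis unfolding Lam_def a b ..
qed

lemma Lam_shift: assumes "h \<in> A2 \<beta>" "s \<le> \<tau>" "\<tau> \<le> 1"
  shows "Lam K c s (s * \<tau>) h = complex_of_real (1/c) * Lam K c s \<tau> h"
proof -
  define a where "a = (\<lambda>n. complex_of_real (c^n) * Rr K h (of_real (\<tau> * s^n)))"
  define b where "b = (\<lambda>m. complex_of_real ((1/c)^Suc m) * Rr K h (of_real (\<tau> / s^Suc m)))"
  define u where "u = (\<lambda>m. complex_of_real ((1/c)^Suc m) * Rr K h (of_real ((s * \<tau>) / s^Suc m)))"
  have sa: "summable a" using summ1[OF assms] by (simp add: a_def)
  have sb: "summable b" using summ2[OF assms] by (simp add: b_def)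
  have c0: "c \<noteq> 0" using cpos by simp
  have A: "(\<lambda>n. complex_of_real (c^n) * Rr K h (of_real ((s * \<tau>) * s^n))) = (\<lambda>n. complex_of_real (1/c) * a (Suc n))"
  proof
    fix n
    have e1: "(1/c) * c^Suc n = c^n" using c0 by simp
    have e2: "\<tau> * s^Suc n = (s * \<tau>) * s^n" by (simp add: mult_ac)
    have "complex_of_real (1/c) * a (Suc n) = complex_of_real ((1/c) * c^Suc n) * Rr K h (of_real (\<tau> * s^Suc n))"
      unfolding a_def of_real_mult by (simp only: mult.assoc)
    then show "complex_of_real (c^n) * Rr K h (of_real ((s * \<tau>) * s^n)) = complex_of_real (1/c) * a (Suc n)"
      unfolding e1 e2 by (rule sym)
  qed
  have sA: "(\<Sum>n. complex_of_real (1/c) * a (Suc n)) = complex_of_real (1/c) * (suminf a - a 0)"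
    using suminf_mult[OF summable_Suc_iff[THEN iffD2, OF sa], of "complex_of_real (1/c)"]
      suminf_split_head[OF sa] by simp
  have u0: "u 0 = complex_of_real (1/c) * a 0" unfolding u_def a_def using s0 by simp
  have uS: "u (Suc k) = complex_of_real (1/c) * b k" for k
  proof -
    have e1: "(1/c) * (1/c)^Suc k = (1/c)^Suc (Suc k)" by simp
    have e2: "\<tau> / s^Suc k = (s * \<tau>) / s^Suc (Suc k)" using s0 by (simp add: field_simps)
    have "complex_of_real (1/c) * b k = complex_of_real ((1/c) * (1/c)^Suc k) * Rr K h (of_real (\<tau> / s^Suc k))"
      unfolding b_def of_real_mult by (simp only: mult.assoc)
    then show ?thesis unfolding e1 e2 u_def by (rule sym)
  qed
  have su: "summable u"
    using summable_Suc_iff[of u] summable_mult[OF sb, of "complex_of_real (1/c)"] uS by simp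
  have sB: "suminf u = complex_of_real (1/c) * a 0 + complex_of_real (1/c) * suminf b"
  proof -
    have "suminf u = u 0 + (\<Sum>k. u (Suc k))" using suminf_split_head[OF su] by simp
    also have "(\<Sum>k. u (Suc k)) = complex_of_real (1/c) * suminf b"
      unfolding uS by (rule suminf_mult[OF sb])
    finally show ?thesis using u0 by simp
  qed
  have "Lam K c s (s * \<tau>) h = (\<Sum>n. complex_of_real (1/c) * a (Suc n)) + suminf u"
    unfolding Lam_def A u_def ..
  also have "\<dots> = complex_of_real (1/c) * (suminf a + suminf b)"
  proof -
    have gen: "\<And>x A B C::complex. x * (A - B) + (x * B + x * C) = x * (A + C)" by (simp add: algebra_simps)
    show ?thesis unfolding sA sB by (rule gen)
  qed
  also have "suminf a + suminf b = Lam K c s \<tau> h" unfolding Lam_def a_def b_def ..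
  finally show ?thesis .
qed

end



context cfg
begin

abbreviation T where "T \<equiv> comp_op (psi (of_real s))"

lemma T_A2: "h \<in> A2 \<beta> \<Longrightarrow> T h \<in> A2 \<beta>"
  unfolding comp_op_def by (rule comp_A2[OF beta s0 s1])

lemma iter_A2: "h \<in> A2 \<beta> \<Longrightarrow> (T ^^ k) h \<in> A2 \<beta>"
  by (induction k) (auto intro: T_A2)

lemma eig: assumes "h \<in> A2 \<beta>" "s \<le> \<tau>" "\<tau> \<le> 1"
  shows "Lam K c s \<tau> (T h) = complex_of_real (1/c) * Lam K c s \<tau> h"
proof -
  have hol: "h holomorphic_on ball 0 1" using assms by (simp add: A2_def)
  have "Lam K c s \<tau> (T h) = Lam K c s (s * \<tau>) h"
    unfolding comp_op_def using assms s0 s1 by (intro Lam_comp[OF hol]) auto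
  also have "\<dots> = complex_of_real (1/c) * Lam K c s \<tau> h" by (rule Lam_shift[OF assms])
  finally show ?thesis .
qed

lemma iter_eig: assumes "h \<in> A2 \<beta>" "s \<le> \<tau>" "\<tau> \<le> 1"
  shows "Lam K c s \<tau> ((T ^^ k) h) = complex_of_real (1/c) ^ k * Lam K c s \<tau> h"
proof (induction k)
  case (Suc k)
  have "Lam K c s \<tau> ((T ^^ Suc k) h) = complex_of_real (1/c) * Lam K c s \<tau> ((T ^^ k) h)"
    using eig[OF iter_A2[OF assms(1)] assms(2,3), of k] by simp
  then show ?case using Suc by simp
qed simp

lemma comb: assumes "g \<in> A2 \<beta>" "f \<in> A2 \<beta>" "s \<le> \<tau>" "\<tau> \<le> 1"
  shows "(\<lambda>z. g z - (\<Sum>k<N. cc k * (T ^^ k) f z)) \<in> A2 \<beta> \<and>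
    Lam K c s \<tau> (\<lambda>z. g z - (\<Sum>k<N. cc k * (T ^^ k) f z))
      = Lam K c s \<tau> g - (\<Sum>k<N. cc k * complex_of_real (1/c) ^ k) * Lam K c s \<tau> f"
proof (induction N)
  case 0
  have "(\<lambda>z. g z - (\<Sum>k<0. cc k * (T ^^ k) f z)) = g" by simp
  then show ?case using assms by simp
next
  case (Suc N)
  define hN where "hN = (\<lambda>z. g z - (\<Sum>k<N. cc k * (T ^^ k) f z))"
  have e: "(\<lambda>z. g z - (\<Sum>k<Suc N. cc k * (T ^^ k) f z)) = (\<lambda>z. hN z - cc N * (T ^^ N) f z)"
    by (simp add: hN_def algebra_simps)
  have hA: "hN \<in> A2 \<beta>" using Suc by (simp add: hN_def)
  have GA: "(T ^^ N) f \<in> A2 \<beta>" by (rule iter_A2[OF assms(2)])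
  have "(\<lambda>z. hN z - cc N * (T ^^ N) f z) \<in> A2 \<beta>" by (rule A2_lin[OF beta hA GA])
  moreover have "Lam K c s \<tau> (\<lambda>z. hN z - cc N * (T ^^ N) f z)
      = Lam K c s \<tau> g - (\<Sum>k<Suc N. cc k * complex_of_real (1/c) ^ k) * Lam K c s \<tau> f"
  proof -
    have "Lam K c s \<tau> (\<lambda>z. hN z - cc N * (T ^^ N) f z) = Lam K c s \<tau> hN - cc N * Lam K c s \<tau> ((T ^^ N) f)"
      by (rule Lam_lin[OF hA GA assms(3,4)])
    also have "Lam K c s \<tau> hN = Lam K c s \<tau> g - (\<Sum>k<N. cc k * complex_of_real (1/c) ^ k) * Lam K c s \<tau> f"
      using Suc by (simp add: hN_def)
    also have "Lam K c s \<tau> ((T ^^ N) f) = complex_of_real (1/c) ^ N * Lam K c s \<tau> f"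
      by (rule iter_eig[OF assms(2-4)])
    finally show ?thesis by (simp add: algebra_simps)
  qed
  ultimately show ?case unfolding e by simp
qed

end



definition f1 :: "nat \<Rightarrow> complex \<Rightarrow> complex" where "f1 M = (\<lambda>z. z^M * (1 - z)^M)"

lemma onemX: "k > M \<Longrightarrow> ((1 - fps_X)^M :: complex fps) $ k = 0"
proof (induction M arbitrary: k)
  case 0 then show ?case by simp
next
  case (Suc M)
  have e: "((1 - fps_X)^Suc M :: complex fps) = (1 - fps_X)^M - fps_X * (1 - fps_X)^M"
    by (simp add: algebra_simps)
  show ?case unfolding e using Suc by (cases k) (auto simp: fps_X_mult_nth)
qed

lemma f1_fps: "f1 M has_fps_expansion fps_X^M * (1 - fps_X)^M"
  unfolding f1_def
  apply (rule has_fps_expansion_mult[where f="\<lambda>z::complex. z^M" and g="\<lambda>z::complex. (1-z)^M"])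
   apply (rule has_fps_expansion_fps_X_power)
  apply (rule has_fps_expansion_power[where f="\<lambda>z::complex. 1 - z"])
  apply (rule has_fps_expansion_diff[OF has_fps_expansion_1 has_fps_expansion_fps_X])
  done

lemma f1_A2: assumes "\<beta> > -1" shows "f1 M \<in> A2 \<beta>"
proof -
  have hol: "f1 M holomorphic_on ball 0 1" unfolding f1_def by (intro holomorphic_intros)
  have tc: "taylor_coeff (f1 M) n = (fps_X^M * (1 - fps_X)^M) $ n" for n
    using fps_nth_fps_expansion[OF f1_fps[of M], of n] by (simp add: taylor_coeff_def)
  have z: "taylor_coeff (f1 M) n = 0" if "n \<notin> {..2*M}" for n
    using that onemX[of M "n - M"] by (simp add: tc fps_X_power_mult_nth)
  have "summable (\<lambda>n. bergman_weight \<beta> n * (cmod (taylor_coeff (f1 M) n))\<^sup>2)"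
    by (rule summable_finite[of "{..2*M}"]) (auto simp: z)
  then show ?thesis using hol by (simp add: A2_def)
qed

definition qM :: "nat \<Rightarrow> complex \<Rightarrow> complex" where
  "qM M v = (1 / (1 + v))^M * (1 - v / (1 + v))^M"

lemma gv_f1: "gv (f1 M) = (\<lambda>v. v^M * qM M v)"
proof
  fix v :: complex
  have "(v / (1 + v))^M = v^M * (1 / (1 + v))^M"
    by (simp add: power_mult_distrib[symmetric])
  then show "gv (f1 M) v = v^M * qM M v" by (simp add: gv_def f1_def qM_def)
qed

lemma bco_f1: assumes "m < M" shows "bco (f1 M) m = 0"
proof -
  have "qM M holomorphic_on ball 0 (1/2)" unfolding qM_def
    using half_ball(1) by (intro holomorphic_intros) auto
  then have "qM M analytic_on ball 0 (1/2)" by (simp add: analytic_on_open)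
  then have "qM M analytic_on {0}" by (rule analytic_on_subset) auto
  then have eq: "qM M has_fps_expansion fps_expansion (qM M) 0" by (rule analytic_at_imp_has_fps_expansion_0)
  have e: "gv (f1 M) has_fps_expansion fps_X^M * fps_expansion (qM M) 0"
    unfolding gv_f1
    by (rule has_fps_expansion_mult[where f="\<lambda>z::complex. z^M" and g="qM M", OF has_fps_expansion_fps_X_power eq])
  show ?thesis
    using fps_nth_fps_expansion[OF e, of m] assms by (simp add: bco_def taylor_coeff_def fps_X_power_mult_nth)
qed

definition phi :: "nat \<Rightarrow> real \<Rightarrow> real" where "phi M x = (x / (1 + x)^2)^M"

lemma Rr_f1: assumes "K \<le> M" "x \<ge> 0"
  shows "Rr K (f1 M) (of_real x) = of_real (phi M x)"
proof -
  have b: "(\<Sum>m<K. bco (f1 M) m * (of_real x)^m) = 0" using assms bco_f1 by (intro sum.neutral) auto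
  have x1: "1 + x \<noteq> 0" using assms by simp
  have "(x / (1 + x))^M * (1 - x / (1 + x))^M = phi M x"
  proof -
    have "1 - x / (1 + x) = 1 / (1 + x)" using x1 by (simp add: field_simps)
    then have "(x / (1 + x))^M * (1 - x / (1 + x))^M = (x / (1 + x) * (1 / (1 + x)))^M"
      by (simp only: power_mult_distrib)
    also have "x / (1 + x) * (1 / (1 + x)) = x / (1 + x)^2" by (simp add: power2_eq_square)
    finally show ?thesis by (simp add: phi_def)
  qed
  moreover have "gv (f1 M) (of_real x) = of_real ((x / (1 + x))^M * (1 - x / (1 + x))^M)"
    by (simp add: gv_def f1_def)
  ultimately show ?thesis by (simp add: Rr_def b)
qed

definition qf :: "real \<Rightarrow> real" where "qf x = 4 * x / (1 + x)^2"

lemma phi_qf: "x \<ge> 0 \<Longrightarrow> phi M x = (1/4)^M * qf x ^ M"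
  by (simp add: phi_def qf_def power_mult_distrib[symmetric])

lemma qf_nonneg: "x \<ge> 0 \<Longrightarrow> qf x \<ge> 0" by (simp add: qf_def)

lemma qf_le_lin: "x \<ge> 0 \<Longrightarrow> qf x \<le> 4 * x"
proof -
  assume x: "x \<ge> 0"
  have "(1 + x)^2 \<ge> 1" using x by (simp add: one_le_power)
  then show ?thesis using x unfolding qf_def by (simp add: divide_le_eq mult_le_cancel_left1)
qed

lemma qf_inv: "x > 0 \<Longrightarrow> qf (1/x) = qf x"
  by (simp add: qf_def field_simps power2_eq_square)

lemma qf_mono: assumes "0 \<le> x" "x \<le> y" "y \<le> 1" shows "qf x \<le> qf y"
proof -
  have eq: "y * (1+x)^2 - x * (1+y)^2 = (y-x)*(1-x*y)" by (simp add: power2_eq_square algebra_simps)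
  have "x * y \<le> 1" using assms by (simp add: mult_le_one)
  then have "(y-x)*(1-x*y) \<ge> 0" using assms by simp
  then have le: "4*x*(1+y)^2 \<le> 4*y*(1+x)^2" using eq by simp
  have px: "(1+x)^2 > 0" and py: "(1+y)^2 > 0" using assms by auto
  have "4*x*(1+y)^2 / (1+x)^2 \<le> 4*y" using le px by (simp add: pos_divide_le_eq)
  then have "4*x / (1+x)^2 * (1+y)^2 \<le> 4*y" by simp
  then show ?thesis unfolding qf_def using py by (simp add: pos_le_divide_eq)
qed

lemma qf_lt1: assumes "0 \<le> x" "x < 1" shows "qf x < 1"
proof -
  have "0 < (1 - x)^2" using assms by simp
  then have "4 * x < (1 + x)^2" by (simp add: power2_eq_square algebra_simps)
  then show ?thesis using assms by (simp add: qf_def)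
qed



lemma phi_nonneg: "x \<ge> 0 \<Longrightarrow> phi M x \<ge> 0" by (simp add: phi_def)

context cfg
begin

lemma r_facts: "0 < sqrt s" "sqrt s < 1" "s \<le> sqrt s" "sqrt s * sqrt s = s"
proof -
  show "0 < sqrt s" "sqrt s < 1" "sqrt s * sqrt s = s" using s0 s1 by auto
  have "s^2 \<le> s" using s0 s1 by (simp add: power2_eq_square mult_left_le)
  then show "s \<le> sqrt s" by (rule real_le_rsqrt)
qed

definition Lr :: "nat \<Rightarrow> real \<Rightarrow> real" where
  "Lr M \<tau> = (\<Sum>n. c^n * phi M (\<tau> * s^n)) + (\<Sum>m. (1/c)^Suc m * phi M (\<tau> / s^Suc m))"

lemma Lam_f1: assumes "K \<le> M" "s \<le> \<tau>" "\<tau> \<le> 1"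
  shows "Lam K c s \<tau> (f1 M) = of_real (Lr M \<tau>)"
    and "summable (\<lambda>n. c^n * phi M (\<tau> * s^n))"
    and "summable (\<lambda>m. (1/c)^Suc m * phi M (\<tau> / s^Suc m))"
proof -
  have A: "f1 M \<in> A2 \<beta>" by (rule f1_A2[OF beta])
  have t0: "0 \<le> \<tau>" using assms s0 by simp
  have e1: "complex_of_real (c^n) * Rr K (f1 M) (of_real (\<tau> * s^n)) = of_real (c^n * phi M (\<tau> * s^n))" for n
    using Rr_f1[OF assms(1), of "\<tau> * s^n"] t0 s0 by simp
  have e2: "complex_of_real ((1/c)^Suc m) * Rr K (f1 M) (of_real (\<tau> / s^Suc m)) = of_real ((1/c)^Suc m * phi M (\<tau> / s^Suc m))" for m
    using Rr_f1[OF assms(1), of "\<tau> / s^Suc m"] t0 s0 by (simp del: power_Suc)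
  have c1: "summable (\<lambda>n. complex_of_real (c^n * phi M (\<tau> * s^n)))"
    using summ1[OF A assms(2,3)] unfolding e1 .
  have c2: "summable (\<lambda>m. complex_of_real ((1/c)^Suc m * phi M (\<tau> / s^Suc m)))"
    using summ2[OF A assms(2,3)] unfolding e2 .
  show s1: "summable (\<lambda>n. c^n * phi M (\<tau> * s^n))" using c1 summable_of_real_iff by blast
  show s2: "summable (\<lambda>m. (1/c)^Suc m * phi M (\<tau> / s^Suc m))" using c2 summable_of_real_iff by blast
  have q1: "(\<Sum>n. complex_of_real (c^n * phi M (\<tau> * s^n))) = of_real (\<Sum>n. c^n * phi M (\<tau> * s^n))"
  proof -
    have "(\<lambda>n. complex_of_real (c^n * phi M (\<tau> * s^n))) sums of_real (\<Sum>n. c^n * phi M (\<tau> * s^n))"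
      by (subst sums_of_real_iff) (rule summable_sums[OF s1])
    then show ?thesis by (simp add: sums_iff)
  qed
  have q2: "(\<Sum>m. complex_of_real ((1/c)^Suc m * phi M (\<tau> / s^Suc m))) = of_real (\<Sum>m. (1/c)^Suc m * phi M (\<tau> / s^Suc m))"
  proof -
    have "(\<lambda>m. complex_of_real ((1/c)^Suc m * phi M (\<tau> / s^Suc m))) sums of_real (\<Sum>m. (1/c)^Suc m * phi M (\<tau> / s^Suc m))"
      by (subst sums_of_real_iff) (rule summable_sums[OF s2])
    then show ?thesis by (simp add: sums_iff)
  qed
  show "Lam K c s \<tau> (f1 M) = of_real (Lr M \<tau>)"
    unfolding Lam_def e1 e2 q1 q2 Lr_def by simp
qed

lemma Lr_lower: assumes "K \<le> M" shows "Lr M 1 \<ge> (1/4)^M"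
proof -
  note S = Lam_f1(2,3)[OF assms, of 1]
  have nn1: "c^n * phi M (1 * s^n) \<ge> 0" for n using cpos s0 by (intro mult_nonneg_nonneg phi_nonneg) auto
  have nn2: "(1/c)^Suc m * phi M (1 / s^Suc m) \<ge> 0" for m using cpos s0 by (intro mult_nonneg_nonneg phi_nonneg) auto
  have "(\<Sum>n\<in>{0}. c^n * phi M (1 * s^n)) \<le> (\<Sum>n. c^n * phi M (1 * s^n))"
    using S(1) s1 s0 nn1 by (intro sum_le_suminf) auto
  then have a: "(1/4)^M \<le> (\<Sum>n. c^n * phi M (1 * s^n))" by (simp add: phi_def)
  have b: "(\<Sum>m. (1/c)^Suc m * phi M (1 / s^Suc m)) \<ge> 0"
    using S(2) s1 s0 nn2 by (intro suminf_nonneg) auto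
  show ?thesis using a b unfolding Lr_def by linarith
qed

lemma cs_r: "(1/c) * s^K \<le> sqrt s"
proof -
  have "(1/c) * s^K = s^K * s^K / sqrt s" using cdef s0 by simp
  also have "\<dots> \<le> s / sqrt s"
  proof (intro divide_right_mono)
    have "s^K * s^K = s^(2*K)" by (simp add: power_add[symmetric] mult_2)
    also have "\<dots> \<le> s^1" using s0 s1 K1 by (intro power_decreasing) auto
    finally show "s^K * s^K \<le> s" by simp
  qed (use r_facts in auto)
  also have "s / sqrt s = sqrt s" using s0 by (metis real_div_sqrt less_imp_le)
  finally show ?thesis .
qed

definition Dp where "Dp = 4^K * (1 + (1/sqrt s)^K) / (1 - sqrt s)"

lemma Lr_upper: assumes "K \<le> M"
  shows "Lr M (sqrt s) \<le> (1/4)^M * qf (sqrt s)^(M-K) * Dp" "Lr M (sqrt s) \<ge> 0"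
proof -
  define r where "r = sqrt s"
  have r: "0 < r" "r < 1" "s \<le> r" "r * r = s" using r_facts by (auto simp: r_def)
  note S = Lam_f1(2,3)[OF assms r(3)[unfolded r_def] less_imp_le[OF r(2)[unfolded r_def]]]
  define Z where "Z = (1/4)^M * qf r^(M-K)"
  have Z0: "Z \<ge> 0" using r by (simp add: Z_def qf_nonneg)
  have qr0: "qf r \<ge> 0" using r by (simp add: qf_nonneg)
  have MK: "M = (M - K) + K" using assms by simp
  have fb: "c^n * phi M (r * s^n) \<le> Z * 4^K * r^n" for n
  proof -
    define x where "x = r * s^n"
    have x: "0 \<le> x" "x \<le> r" using r s0 s1 by (auto simp: x_def mult_left_le power_le_one)
    have "phi M x = (1/4)^M * (qf x^(M-K) * qf x^K)" using x phi_qf[of x M] MK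
      by (metis power_add)
    also have "\<dots> \<le> (1/4)^M * (qf r^(M-K) * (4*x)^K)"
      using x r qf_mono[of x r] qf_le_lin[of x] qf_nonneg[of x]
      by (intro mult_left_mono mult_mono power_mono) auto
    finally have p: "phi M x \<le> Z * (4*x)^K" by (simp add: Z_def mult_ac)
    have "c^n * phi M x \<le> c^n * (Z * (4*x)^K)" using p cpos by (intro mult_left_mono) auto
    also have "\<dots> = Z * 4^K * r^K * (c * s^K)^n"
      by (simp add: x_def power_mult_distrib power_mult[symmetric] mult_ac)
    also have "\<dots> = Z * 4^K * r^K * r^n" using cs by (simp add: r_def)
    also have "\<dots> \<le> Z * 4^K * 1 * r^n"
      using r Z0 by (intro mult_right_mono mult_left_mono power_le_one) auto
    finally show ?thesis by (simp add: x_def)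
  qed
  have bb: "(1/c)^Suc m * phi M (r / s^Suc m) \<le> Z * 4^K * (1/r)^K * r^Suc m" for m
  proof -
    define x where "x = r / s^Suc m"
    have sp: "s^Suc m > 0" "s^Suc m \<le> s" using s0 s1 by (auto simp: power_le_one mult_left_le)
    have x0: "x > 0" using r sp by (simp add: x_def)
    have ix: "1/x = s^Suc m / r" by (simp add: x_def)
    have ix2: "1/x \<le> r"
    proof -
      have "s^Suc m / r \<le> s / r" using sp r by (intro divide_right_mono) auto
      also have "s / r = r" using r by (simp add: field_simps)
      finally show ?thesis using ix by simp
    qed
    have "phi M x = (1/4)^M * (qf (1/x)^(M-K) * qf (1/x)^K)" using x0 phi_qf[of x M] MK qf_inv[OF x0]
      by (metis less_imp_le power_add)
    also have "\<dots> \<le> (1/4)^M * (qf r^(M-K) * (4*(1/x))^K)"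
      using x0 r ix2 qf_mono[of "1/x" r] qf_le_lin[of "1/x"] qf_nonneg[of "1/x"]
      by (intro mult_left_mono mult_mono power_mono) auto
    finally have p: "phi M x \<le> Z * (4*(1/x))^K" by (simp add: Z_def mult_ac)
    have "(1/c)^Suc m * phi M x \<le> (1/c)^Suc m * (Z * (4*(1/x))^K)" using p cpos by (intro mult_left_mono) auto
    also have "\<dots> = Z * 4^K * (1/r)^K * ((1/c) * s^K)^Suc m"
      unfolding ix by (simp add: power_mult_distrib power_divide power_mult[symmetric] mult_ac del: power_Suc)
    also have "\<dots> \<le> Z * 4^K * (1/r)^K * r^Suc m"
      using cs_r r cpos Z0 s0 by (intro mult_left_mono power_mono) (auto simp: r_def)
    finally show ?thesis by (simp add: x_def del: power_Suc)
  qed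
  have g1: "(\<lambda>n. Z * 4^K * r^n) sums (Z * 4^K * (1/(1-r)))" using r by (intro sums_mult geometric_sums) auto
  have g2: "(\<lambda>m. Z * 4^K * (1/r)^K * r^Suc m) sums (Z * 4^K * (1/r)^K * (r * (1/(1-r))))"
  proof -
    have "(\<lambda>m. r * r^m) sums (r * (1/(1-r)))" using r by (intro sums_mult geometric_sums) auto
    then have "(\<lambda>m. Z * 4^K * (1/r)^K * (r * r^m)) sums (Z * 4^K * (1/r)^K * (r * (1/(1-r))))" by (rule sums_mult)
    then show ?thesis by simp
  qed
  have u1: "(\<Sum>n. c^n * phi M (r * s^n)) \<le> Z * 4^K * (1/(1-r))"
    using suminf_le[OF fb S(1)[unfolded r_def[symmetric]] sums_summable[OF g1]] g1 by (simp add: sums_iff)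
  have u2: "(\<Sum>m. (1/c)^Suc m * phi M (r / s^Suc m)) \<le> Z * 4^K * (1/r)^K * (r * (1/(1-r)))"
    using suminf_le[OF bb S(2)[unfolded r_def[symmetric]] sums_summable[OF g2]] g2 by (simp add: sums_iff)
  have u3: "Z * 4^K * (1/r)^K * (r * (1/(1-r))) \<le> Z * 4^K * (1/r)^K * (1 * (1/(1-r)))"
    using r Z0 by (intro mult_left_mono mult_right_mono) auto
  have "Lr M r \<le> Z * 4^K * (1/(1-r)) + Z * 4^K * (1/r)^K * (1/(1-r))"
    using u1 u2 u3 unfolding Lr_def by linarith
  also have "\<dots> = Z * Dp"
  proof -
    have gen: "\<And>Z A B d::real. Z*A*(1/d) + Z*A*B*(1/d) = Z*(A*(1+B)/d)" by (simp add: divide_inverse algebra_simps)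
    show ?thesis unfolding Dp_def r_def[symmetric] by (rule gen)
  qed
  finally show "Lr M (sqrt s) \<le> (1/4)^M * qf (sqrt s)^(M-K) * Dp" by (simp add: Z_def r_def)
  have nn1: "c^n * phi M (r * s^n) \<ge> 0" for n using cpos s0 r by (intro mult_nonneg_nonneg phi_nonneg) auto
  have nn2: "(1/c)^Suc m * phi M (r / s^Suc m) \<ge> 0" for m using cpos s0 r by (intro mult_nonneg_nonneg phi_nonneg) auto
  have "(\<Sum>n. c^n * phi M (r * s^n)) \<ge> 0" using S(1)[unfolded r_def[symmetric]] nn1 by (intro suminf_nonneg) auto
  moreover have "(\<Sum>m. (1/c)^Suc m * phi M (r / s^Suc m)) \<ge> 0" using S(2)[unfolded r_def[symmetric]] nn2 by (intro suminf_nonneg) auto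
  ultimately show "Lr M (sqrt s) \<ge> 0" unfolding Lr_def r_def by linarith
qed

end



context cfg
begin

lemma exists_test:
  "\<exists>F1 F2. F1 \<in> A2 \<beta> \<and> F2 \<in> A2 \<beta> \<and> Lam K c s 1 F1 \<noteq> 0 \<and>
     Lam K c s 1 F1 * Lam K c s (sqrt s) F2 - Lam K c s 1 F2 * Lam K c s (sqrt s) F1 \<noteq> 0"
proof -
  define r where "r = sqrt s"
  have r: "0 < r" "r < 1" "s \<le> r" "r * r = s" using r_facts by (auto simp: r_def)
  define qr where "qr = qf r"
  have qr: "0 \<le> qr" "qr < 1" using qf_nonneg[of r] qf_lt1[of r] r by (auto simp: qr_def)
  have "(1/sqrt s)^K \<ge> 0" using r_facts by simp
  then have "0 < 1 + (1/sqrt s)^K" by linarith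
  then have Dp0: "Dp > 0" using r_facts unfolding Dp_def by (intro divide_pos_pos mult_pos_pos) auto
  define \<delta> where "\<delta> = min 1 (1/c) / 2"
  have d0: "\<delta> > 0" using cpos by (simp add: \<delta>_def)
  obtain n where n: "qr^n < \<delta> / Dp" using real_arch_pow_inv[of "\<delta> / Dp" qr] d0 Dp0 qr by auto
  define M where "M = K + n"
  have KM: "K \<le> M" and MK: "M - K = n" by (auto simp: M_def)
  define L1 where "L1 = Lr M 1"
  define L2 where "L2 = Lr M r"
  have L1: "L1 \<ge> (1/4)^M" using Lr_lower[OF KM] by (simp add: L1_def)
  have L2: "0 \<le> L2" "L2 \<le> (1/4)^M * qr^n * Dp"
    using Lr_upper[OF KM] by (auto simp: L2_def r_def qr_def MK)
  have q4: "(1/4::real)^M > 0" by simp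
  have "qr^n * Dp < \<delta>" using n Dp0 by (simp add: field_simps)
  then have L2d: "L2 < (1/4)^M * \<delta>"
    using L2(2) q4 by (smt (verit) mult_strict_left_mono mult.assoc)
  have dd: "\<delta> * \<delta> < 1/c"
  proof -
    have "\<delta> \<le> 1/2" "\<delta> \<le> (1/c)/2" by (auto simp: \<delta>_def)
    then have "\<delta> * \<delta> \<le> (1/2) * ((1/c)/2)" using d0 by (intro mult_mono) auto
    moreover have "(1/2) * ((1/c)/2) < 1/c"
    proof -
      have p: "1/c > 0" using cpos by simp
      have g: "\<And>x::real. 0 < x \<Longrightarrow> (1/2) * (x/2) < x" by simp
      show ?thesis by (rule g[OF p])
    qed
    ultimately show ?thesis by linarith
  qed
  have "L2 * L2 < ((1/4)^M * \<delta>) * ((1/4)^M * \<delta>)"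
    using L2d L2(1) by (intro mult_strict_mono) auto
  also have "\<dots> = ((1/4)^M)^2 * (\<delta> * \<delta>)" by (simp add: power2_eq_square mult_ac)
  also have "\<dots> \<le> ((1/4)^M)^2 * (1/c)" using dd by (intro mult_left_mono) auto
  also have "\<dots> \<le> L1^2 * (1/c)" using L1 cpos by (intro mult_right_mono power_mono) auto
  finally have key: "L2 * L2 < L1^2 * (1/c)" .
  define F1 where "F1 = f1 M"
  define F2 where "F2 = F1 \<circ> psi (of_real r)"
  have A1: "F1 \<in> A2 \<beta>" by (simp add: F1_def f1_A2[OF beta])
  have hol: "F1 holomorphic_on ball 0 1" using A1 by (simp add: A2_def)
  have A2': "F2 \<in> A2 \<beta>" unfolding F2_def by (rule comp_A2[OF beta r(1,2) A1])
  have e1: "Lam K c s 1 F1 = of_real L1" using Lam_f1(1)[OF KM, of 1] s1 by (simp add: F1_def L1_def)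
  have e2: "Lam K c s r F1 = of_real L2" using Lam_f1(1)[OF KM, of r] r by (simp add: F1_def L2_def)
  have e3: "Lam K c s 1 F2 = of_real L2"
    using Lam_comp[OF hol r(1,2), of 1] e2 by (simp add: F2_def)
  have e4: "Lam K c s r F2 = of_real (1/c) * of_real L1"
  proof -
    have "Lam K c s r F2 = Lam K c s (r * r) F1" unfolding F2_def using r by (intro Lam_comp[OF hol r(1,2)]) auto
    also have "\<dots> = Lam K c s (s * 1) F1" using r by simp
    also have "\<dots> = of_real (1/c) * Lam K c s 1 F1" by (rule Lam_shift[OF A1]) (use s1 in auto)
    finally show ?thesis using e1 by simp
  qed
  have det: "Lam K c s 1 F1 * Lam K c s r F2 - Lam K c s 1 F2 * Lam K c s r F1 = of_real (L1^2 * (1/c) - L2 * L2)"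
    unfolding e1 e2 e3 e4 by (simp add: power2_eq_square algebra_simps)
  have "L1^2 * (1/c) - L2 * L2 \<noteq> 0" using key by simp
  then have D: "Lam K c s 1 F1 * Lam K c s r F2 - Lam K c s 1 F2 * Lam K c s r F1 \<noteq> 0"
    unfolding det of_real_eq_0_iff .
  have "L1 \<noteq> 0" using L1 q4 by linarith
  then have N: "Lam K c s 1 F1 \<noteq> 0" unfolding e1 by simp
  show ?thesis using A1 A2' N D unfolding r_def by blast
qed

end



theorem lemma4p2:
  fixes \<beta> :: real and s :: complex
  assumes "\<beta> > -1"
    and "0 < cmod s" and "cmod s < 1"
    and "\<forall>z\<in>ball 0 1. 1 - (1 - s) * z \<noteq> 0"
    and "\<forall>z\<in>ball 0 1. psi s z \<in> ball 0 1"
  shows "\<not> cyclic_on_A2 \<beta> (comp_op (psi s))"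
proof
  assume cyc: "cyclic_on_A2 \<beta> (comp_op (psi s))"
  obtain t where st: "s = of_real t" and t: "0 < t" "t < 1" using s_real[OF assms(2-5)] by blast
  define K where "K = nat \<lceil>(2+\<beta>)/2\<rceil> + 1"
  have K1: "K \<ge> 1" by (simp add: K_def)
  have KB: "2 + \<beta> \<le> 2 * (real K - 1)"
  proof -
    have cp: "\<lceil>(2+\<beta>)/2\<rceil> \<ge> 0" using assms(1) by simp
    have "real K - 1 = real (nat \<lceil>(2+\<beta>)/2\<rceil>)" by (simp add: K_def)
    also have "\<dots> = real_of_int \<lceil>(2+\<beta>)/2\<rceil>" using cp by simp
    also have "\<dots> \<ge> (2+\<beta>)/2" by (rule le_of_int_ceiling)
    finally show ?thesis by simp
  qed
  define c where "c = sqrt t / t^K"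
  interpret cfg \<beta> K t c using assms(1) K1 KB t by unfold_locales (auto simp: c_def)
  from cyc obtain f where fA: "f \<in> A2 \<beta>" and P:
    "\<forall>g\<in>A2 \<beta>. \<forall>\<epsilon>>0. \<exists>N::nat. \<exists>cc::nat \<Rightarrow> complex.
        A2_norm \<beta> (\<lambda>z. g z - (\<Sum>k<N. cc k * (comp_op (psi (of_real t)) ^^ k) f z)) < \<epsilon>"
    unfolding cyclic_on_A2_def st by blast
  obtain F1 F2 where F: "F1 \<in> A2 \<beta>" "F2 \<in> A2 \<beta>" "Lam K c t 1 F1 \<noteq> 0"
    "Lam K c t 1 F1 * Lam K c t (sqrt t) F2 - Lam K c t 1 F2 * Lam K c t (sqrt t) F1 \<noteq> 0"
    using exists_test by blast
  define A where "A = Lam K c t 1"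
  define B where "B = Lam K c t (sqrt t)"
  have tt: "t \<le> 1" "t \<le> sqrt t" "sqrt t \<le> 1" using r_facts t by auto
  have approx: "\<exists>\<sigma> h. h \<in> A2 \<beta> \<and> A2_norm \<beta> h < \<epsilon> \<and> A h = A g - \<sigma> * A f \<and> B h = B g - \<sigma> * B f"
    if g: "g \<in> A2 \<beta>" and e: "\<epsilon> > 0" for g \<epsilon>
  proof -
    obtain N cc where Nc: "A2_norm \<beta> (\<lambda>z. g z - (\<Sum>k<N. cc k * (comp_op (psi (of_real t)) ^^ k) f z)) < \<epsilon>"
      using P g e by blast
    define h where "h = (\<lambda>z. g z - (\<Sum>k<N. cc k * (comp_op (psi (of_real t)) ^^ k) f z))"
    define \<sigma> where "\<sigma> = (\<Sum>k<N. cc k * complex_of_real (1/c) ^ k)"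
    note c1 = comb[OF g fA tt(1) order_refl, where N=N and cc=cc]
    note c2 = comb[OF g fA tt(2,3), where N=N and cc=cc]
    show ?thesis
      using c1 c2 Nc unfolding h_def[symmetric] \<sigma>_def[symmetric] A_def B_def by blast
  qed
  have bnd: "cmod (A h) \<le> Mb * A2_norm \<beta> h" "cmod (B h) \<le> Mb * A2_norm \<beta> h" if "h \<in> A2 \<beta>" for h
    using Lam_bound[OF that] tt unfolding A_def B_def by auto
  have Mb0: "Mb > 0" by (rule Mb_pos)
  show False
  proof (cases "A f = 0 \<and> B f = 0")
    case True
    define \<epsilon> where "\<epsilon> = cmod (A F1) / Mb"
    have e0: "\<epsilon> > 0" using F(3) Mb0 by (simp add: \<epsilon>_def A_def)
    obtain \<sigma> h where h: "h \<in> A2 \<beta>" "A2_norm \<beta> h < \<epsilon>" "A h = A F1 - \<sigma> * A f"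
      using approx[OF F(1) e0] by blast
    have "cmod (A F1) = cmod (A h)" using h(3) True by simp
    also have "\<dots> \<le> Mb * A2_norm \<beta> h" by (rule bnd(1)[OF h(1)])
    also have "\<dots> < Mb * \<epsilon>" using h(2) Mb0 by simp
    also have "\<dots> = cmod (A F1)" using Mb0 by (simp add: \<epsilon>_def)
    finally show False by simp
  next
    case False
    define \<Phi> where "\<Phi> = (\<lambda>g. B f * A g - A f * B g)"
    have "\<exists>g. g \<in> A2 \<beta> \<and> \<Phi> g \<noteq> 0"
    proof (rule ccontr)
      assume "\<not> (\<exists>g. g \<in> A2 \<beta> \<and> \<Phi> g \<noteq> 0)"
      then have z1: "B f * A F1 = A f * B F1" and z2: "B f * A F2 = A f * B F2"
        using F(1,2) unfolding \<Phi>_def by auto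
      define det where "det = A F1 * B F2 - A F2 * B F1"
      have det0: "det \<noteq> 0" using F(4) by (simp add: det_def A_def B_def)
      have "det * B f = B F2 * (B f * A F1) - B F1 * (B f * A F2)" by (simp add: det_def algebra_simps)
      also have "\<dots> = 0" unfolding z1 z2 by (simp add: algebra_simps)
      finally have b0: "B f = 0" using det0 by simp
      have "det * A f = A F1 * (A f * B F2) - A F2 * (A f * B F1)" by (simp add: det_def algebra_simps)
      also have "\<dots> = 0" unfolding z1[symmetric] z2[symmetric] by (simp add: algebra_simps)
      finally have a0: "A f = 0" using det0 by simp
      show False using False a0 b0 by simp
    qed
    then obtain g where g: "g \<in> A2 \<beta>" "\<Phi> g \<noteq> 0" by blast
    define S where "S = cmod (A f) + cmod (B f)"
    have S0: "S > 0"
    proof (cases "A f = 0")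
      case True
      then have "B f \<noteq> 0" using False by simp
      then show ?thesis by (simp add: S_def True)
    next
      case False
      then have "cmod (A f) > 0" by simp
      then show ?thesis unfolding S_def by (smt (verit) norm_ge_zero)
    qed
    define \<epsilon> where "\<epsilon> = cmod (\<Phi> g) / (S * Mb)"
    have e0: "\<epsilon> > 0" using g(2) S0 Mb0 by (simp add: \<epsilon>_def)
    obtain \<sigma> h where h: "h \<in> A2 \<beta>" "A2_norm \<beta> h < \<epsilon>" "A h = A g - \<sigma> * A f" "B h = B g - \<sigma> * B f"
      using approx[OF g(1) e0] by blast
    have "\<Phi> h = \<Phi> g" unfolding \<Phi>_def h(3,4) by (simp add: algebra_simps)
    then have "cmod (\<Phi> g) = cmod (B f * A h - A f * B h)" by (simp add: \<Phi>_def)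
    also have "\<dots> \<le> cmod (B f) * cmod (A h) + cmod (A f) * cmod (B h)"
      by (rule order_trans[OF norm_triangle_ineq4]) (simp add: norm_mult)
    also have "\<dots> \<le> cmod (B f) * (Mb * A2_norm \<beta> h) + cmod (A f) * (Mb * A2_norm \<beta> h)"
      using bnd[OF h(1)] by (intro add_mono mult_left_mono) auto
    also have "\<dots> = S * Mb * A2_norm \<beta> h" by (simp add: S_def algebra_simps)
    also have "\<dots> < S * Mb * \<epsilon>" using h(2) S0 Mb0 by simp
    also have "\<dots> = cmod (\<Phi> g)" using S0 Mb0 by (simp add: \<epsilon>_def)
    finally show False by simp
  qed
qed



end
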